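(* Let $A_6$ be the Cayley-Dickson algebra of 64-nions with canonical basis $e_0,\dots,e_{63}$. Then: (i) the 63 imaginary units split into 35 units each lying on exactly 21 defective triples, 21 units each lying on exactly 15 defective triples, and 7 units lying on no defective triple; (ii) the incidence structure $\mathcal{C}_6$ whose points are the 21 units of the second kind and whose lines are the defective triples consisting solely of such units is a $(21_5,35_3)$-configuration isomorphic to the combinatorial Grassmannian $G_2(7)$; (iii) there is a bijection $\varphi$ from the set of geometric hyperplanes of $\mathcal{C}_6$ (of which there are 63) onto $\{e_1,\dots,e_{63}\}$ mapping the set of lines of the Veldkamp space $\mathcal{V}(\mathcal{C}_6)$ bijectively onto the set of distinguished triples of $A_6$ (so $\mathcal{V}(\mathcal{C}_6)\cong\mathrm{PG}(5,2)$), such that the geometric hyperplanes with $9$ points (a line together with its complement, the latter being a Pasch configuration $G_2(4)$), $11$ points (a point together with its complement, the latter being a Desargues configuration $G_2(5)$) and $15$ points (a copy of $G_2(6)$) are mapped onto the units of the first, second and third kind in (i), respectively.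
   Context: Cayley-Dickson algebras: $A_0=\mathbb{R}$ with trivial conjugation; $A_{N+1}$ is the set of ordered pairs $(x,y)$ with $x,y\in A_N$, with conjugation $(x,y)^*=(x^*,-y)$ and multiplication $(x,y)(X,Y)=(xX-Yy^*,\,x^*Y+Xy)$. The canonical basis of $A_0$ is $e_0=1$; if $e_0,\dots,e_{2^N-1}$ is the canonical basis of $A_N$, the canonical basis of $A_{N+1}$ is $e_a=(e_a,0)$ and $e_{2^N+a}=(0,e_a)$ for $0\le a\le 2^N-1$. The imaginary units of $A_N$ are $e_1,\dots,e_{2^N-1}$. A distinguished triple is a set $\{e_a,e_b,e_c\}$ with $1\le a<b<c\le 2^N-1$ and $e_ae_b=\pm e_c$; it is called ordinary if $a+b=c$ and defective if $a+b\neq c$. A $(v_r,b_k)$-configuration is a point-line incidence structure with $v$ points and $b$ lines, each line having $k$ points, each point on $r$ lines, two distinct points on at most one common line. The combinatorial Grassmannian $G_2(n)$ is the point-line incidence structure whose points are the $2$-element subsets of $\{1,\dots,n\}$, whose lines are the $3$-element subsets, incidence being inclusion. A geometric hyperplane of a point-line incidence structure is a proper subset $H$ of the point set such that every line is either contained in $H$ or meets $H$ in exactly one point. The Veldkamp space $\mathcal{V}(\mathcal{C})$ has as points the geometric hyperplanes of $\mathcal{C}$; for distinct hyperplanes $H',H''$ the Veldkamp line $H'H''$ is the set of all geometric hyperplanes $H$ with $H=H'$, $H=H''$, or $H'\cap H''=H'\cap H=H''\cap H$. *)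

theory Defs
  imports Complex_Main
begin

text \<open>An element of A_N is represented by its coordinate function w.r.t. the canonical
basis, i.e. a function nat => real supported on {0..<2^N}.  An element of A_(N+1) is
the pair (x,y) of A_N elements, x = first 2^N coordinates, y = next 2^N coordinates;
this matches the canonical basis convention e_a = (e_a,0), e_(2^N+a) = (0,e_a).\<close>

definition cd_lo :: "nat \<Rightarrow> (nat \<Rightarrow> real) \<Rightarrow> nat \<Rightarrow> real" where
  "cd_lo n u = (\<lambda>i. if i < 2^n then u i else 0)"

definition cd_hi :: "nat \<Rightarrow> (nat \<Rightarrow> real) \<Rightarrow> nat \<Rightarrow> real" where
  "cd_hi n u = (\<lambda>i. if i < 2^n then u (2^n + i) else 0)"

definition cd_pair :: "nat \<Rightarrow> (nat \<Rightarrow> real) \<Rightarrow> (nat \<Rightarrow> real) \<Rightarrow> nat \<Rightarrow> real" where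
  "cd_pair n x y = (\<lambda>i. if i < 2^n then x i else if i < 2^Suc n then y (i - 2^n) else 0)"

fun cd_conj :: "nat \<Rightarrow> (nat \<Rightarrow> real) \<Rightarrow> nat \<Rightarrow> real" where
  "cd_conj 0 u = (\<lambda>i. if i = 0 then u 0 else 0)"
| "cd_conj (Suc n) u = cd_pair n (cd_conj n (cd_lo n u)) (\<lambda>i. - cd_hi n u i)"

fun cd_mult :: "nat \<Rightarrow> (nat \<Rightarrow> real) \<Rightarrow> (nat \<Rightarrow> real) \<Rightarrow> nat \<Rightarrow> real" where
  "cd_mult 0 u v = (\<lambda>i. if i = 0 then u 0 * v 0 else 0)"
| "cd_mult (Suc n) u v =
     (let x = cd_lo n u; y = cd_hi n u; X = cd_lo n v; Y = cd_hi n v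
      in cd_pair n (\<lambda>i. cd_mult n x X i - cd_mult n Y (cd_conj n y) i)
                   (\<lambda>i. cd_mult n (cd_conj n x) Y i + cd_mult n X y i))"

definition cd_basis :: "nat \<Rightarrow> nat \<Rightarrow> real" where
  "cd_basis a = (\<lambda>i. if i = a then 1 else 0)"

text \<open>Imaginary units of A_N, identified with their indices a (e_a).\<close>
definition cd_units :: "nat \<Rightarrow> nat set" where
  "cd_units N = {1..2^N - 1}"

definition distinguished_triple :: "nat \<Rightarrow> nat set \<Rightarrow> bool" where
  "distinguished_triple N T \<longleftrightarrow>
     (\<exists>a b c. T = {a, b, c} \<and> 1 \<le> a \<and> a < b \<and> b < c \<and> c \<le> 2^N - 1 \<and>
        (cd_mult N (cd_basis a) (cd_basis b) = cd_basis c \<or>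
         cd_mult N (cd_basis a) (cd_basis b) = (\<lambda>i. - cd_basis c i)))"

definition defective_triple :: "nat \<Rightarrow> nat set \<Rightarrow> bool" where
  "defective_triple N T \<longleftrightarrow> distinguished_triple N T \<and>
     (\<exists>a b c. T = {a, b, c} \<and> a < b \<and> b < c \<and> a + b \<noteq> c)"

definition defect_count :: "nat \<Rightarrow> nat \<Rightarrow> nat" where
  "defect_count N u = card {T. defective_triple N T \<and> u \<in> T}"

definition configuration ::
  "'p set \<Rightarrow> 'l set \<Rightarrow> ('p \<Rightarrow> 'l \<Rightarrow> bool) \<Rightarrow> nat \<Rightarrow> nat \<Rightarrow> nat \<Rightarrow> nat \<Rightarrow> bool" where
  "configuration P L I v r b k \<longleftrightarrow>
     finite P \<and> finite L \<and> card P = v \<and> card L = b \<and>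
     (\<forall>l\<in>L. card {p\<in>P. I p l} = k) \<and>
     (\<forall>p\<in>P. card {l\<in>L. I p l} = r) \<and>
     (\<forall>p\<in>P. \<forall>q\<in>P. p \<noteq> q \<longrightarrow> card {l\<in>L. I p l \<and> I q l} \<le> 1)"

definition isomorphic_inc ::
  "'p set \<Rightarrow> 'l set \<Rightarrow> ('p \<Rightarrow> 'l \<Rightarrow> bool) \<Rightarrow>
   'q set \<Rightarrow> 'm set \<Rightarrow> ('q \<Rightarrow> 'm \<Rightarrow> bool) \<Rightarrow> bool" where
  "isomorphic_inc P L I P' L' I' \<longleftrightarrow>
     (\<exists>f g. bij_betw f P P' \<and> bij_betw g L L' \<and>
        (\<forall>p\<in>P. \<forall>l\<in>L. I p l \<longleftrightarrow> I' (f p) (g l)))"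

definition G2_points :: "nat \<Rightarrow> nat set set" where
  "G2_points n = {S. S \<subseteq> {1..n} \<and> card S = 2}"

definition G2_lines :: "nat \<Rightarrow> nat set set" where
  "G2_lines n = {S. S \<subseteq> {1..n} \<and> card S = 3}"

definition isomorphic_to_G2 :: "'p set \<Rightarrow> 'l set \<Rightarrow> ('p \<Rightarrow> 'l \<Rightarrow> bool) \<Rightarrow> nat \<Rightarrow> bool" where
  "isomorphic_to_G2 P L I n \<longleftrightarrow>
     isomorphic_inc P L I (G2_points n) (G2_lines n) (\<lambda>p l. p \<subseteq> l)"

definition geometric_hyperplane ::
  "'p set \<Rightarrow> 'l set \<Rightarrow> ('p \<Rightarrow> 'l \<Rightarrow> bool) \<Rightarrow> 'p set \<Rightarrow> bool" where
  "geometric_hyperplane P L I H \<longleftrightarrow> H \<subset> P \<and>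
     (\<forall>l\<in>L. {p\<in>P. I p l} \<subseteq> H \<or> card {p\<in>P. I p l \<and> p \<in> H} = 1)"

definition hyperplanes :: "'p set \<Rightarrow> 'l set \<Rightarrow> ('p \<Rightarrow> 'l \<Rightarrow> bool) \<Rightarrow> 'p set set" where
  "hyperplanes P L I = {H. geometric_hyperplane P L I H}"

definition veldkamp_line ::
  "'p set \<Rightarrow> 'l set \<Rightarrow> ('p \<Rightarrow> 'l \<Rightarrow> bool) \<Rightarrow> 'p set \<Rightarrow> 'p set \<Rightarrow> 'p set set" where
  "veldkamp_line P L I H1 H2 = {H \<in> hyperplanes P L I.
      H = H1 \<or> H = H2 \<or> (H1 \<inter> H2 = H1 \<inter> H \<and> H1 \<inter> H = H2 \<inter> H)}"

definition veldkamp_lines :: "'p set \<Rightarrow> 'l set \<Rightarrow> ('p \<Rightarrow> 'l \<Rightarrow> bool) \<Rightarrow> 'p set set set" where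
  "veldkamp_lines P L I = {veldkamp_line P L I H1 H2 | H1 H2.
      H1 \<in> hyperplanes P L I \<and> H2 \<in> hyperplanes P L I \<and> H1 \<noteq> H2}"

definition collinear :: "'l set \<Rightarrow> ('p \<Rightarrow> 'l \<Rightarrow> bool) \<Rightarrow> 'p \<Rightarrow> 'p \<Rightarrow> bool" where
  "collinear L I p q \<longleftrightarrow> (\<exists>l\<in>L. I p l \<and> I q l)"

definition kind :: "nat \<Rightarrow> nat set" where
  "kind d = {u \<in> cd_units 6. defect_count 6 u = d}"

definition C6_points :: "nat set" where
  "C6_points = kind 15"

definition C6_lines :: "nat set set" where
  "C6_lines = {T. defective_triple 6 T \<and> T \<subseteq> C6_points}"

end

theory Submission
  imports Defs
begin

lemma nat_bit_lt: "(a::nat) < 2^n \<Longrightarrow> bit a k \<Longrightarrow> k < n"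
  by (metis bit_take_bit_iff take_bit_nat_eq_self_iff)

lemma xor_lt: "(a::nat) < 2^n \<Longrightarrow> b < 2^n \<Longrightarrow> xor a b < 2^n"
  by (metis take_bit_nat_eq_self_iff take_bit_nat_less_exp take_bit_xor)

lemma bit_pow_plus: "(a::nat) < 2^n \<Longrightarrow> bit (2^n + a) k \<longleftrightarrow> (k = n \<or> bit a k)"
  apply (subst bit_disjunctive_add_iff)
  using nat_bit_lt by (auto simp: bit_exp_iff)

lemma xor_hi1: "(a::nat) < 2^n \<Longrightarrow> b < 2^n \<Longrightarrow> xor (2^n + a) b = 2^n + xor a b"
  apply (rule bit_eqI)
  using xor_lt[of a n b] nat_bit_lt[of b n] by (auto simp: bit_pow_plus bit_xor_iff)

lemma xor_hi2: "(a::nat) < 2^n \<Longrightarrow> b < 2^n \<Longrightarrow> xor a (2^n + b) = 2^n + xor a b"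
  by (metis xor.commute xor_hi1)

lemma xor_hi3: "(a::nat) < 2^n \<Longrightarrow> b < 2^n \<Longrightarrow> xor (2^n + a) (2^n + b) = xor a b"
  apply (rule bit_eqI)
  using nat_bit_lt[of b n] nat_bit_lt[of a n] by (auto simp: bit_pow_plus bit_xor_iff)

definition sc :: "real \<Rightarrow> (nat \<Rightarrow> real) \<Rightarrow> nat \<Rightarrow> real" where
  "sc c u = (\<lambda>i. c * u i)"

lemma lo_sc: "cd_lo n (sc c u) = sc c (cd_lo n u)"
  by (auto simp: cd_lo_def sc_def)
lemma hi_sc: "cd_hi n (sc c u) = sc c (cd_hi n u)"
  by (auto simp: cd_hi_def sc_def)
lemma pair_sc: "cd_pair n (sc c x) (sc c y) = sc c (cd_pair n x y)"
  by (auto simp: cd_pair_def sc_def)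

lemma conj_sc: "cd_conj n (sc c u) = sc c (cd_conj n u)"
proof (induction n arbitrary: u)
  case 0 then show ?case by (auto simp: sc_def)
next
  case (Suc n)
  have "(\<lambda>i. - cd_hi n (sc c u) i) = sc c (\<lambda>i. - cd_hi n u i)"
    unfolding hi_sc by (simp add: sc_def)
  then show ?case by (simp add: lo_sc Suc pair_sc)
qed

lemma mult_sc: "cd_mult n (sc c u) v = sc c (cd_mult n u v) \<and> cd_mult n u (sc c v) = sc c (cd_mult n u v)"
proof (induction n arbitrary: u v)
  case 0 then show ?case by (auto simp: sc_def)
next
  case (Suc n)
  have e1: "(\<lambda>i. sc c f i - sc c g i) = sc c (\<lambda>i. f i - g i)" for f g
    by (auto simp: sc_def algebra_simps)
  have e2: "(\<lambda>i. sc c f i + sc c g i) = sc c (\<lambda>i. f i + g i)" for f g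
    by (auto simp: sc_def algebra_simps)
  show ?case
    by (simp add: Let_def lo_sc hi_sc conj_sc Suc e1 e2 pair_sc)
qed

lemma sc0: "sc 0 u = (\<lambda>_. 0)" by (simp add: sc_def)

lemma mult_z1: "cd_mult n (\<lambda>_. 0) v = (\<lambda>_. 0)"
  using mult_sc[of n 0 "\<lambda>_. 0" v] by (simp add: sc0)
lemma mult_z2: "cd_mult n u (\<lambda>_. 0) = (\<lambda>_. 0)"
  using mult_sc[of n 0 u "\<lambda>_. 0"] by (simp add: sc0)
lemma conj_z: "cd_conj n (\<lambda>_. 0) = (\<lambda>_. 0)"
  using conj_sc[of n 0 "\<lambda>_. 0"] by (simp add: sc0)

lemma lo_basis: "cd_lo n (cd_basis a) = (if a < 2^n then cd_basis a else (\<lambda>_. 0))"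
  by (auto simp: cd_lo_def cd_basis_def)
lemma hi_basis: "cd_hi n (cd_basis a) = (if 2^n \<le> a \<and> a < 2^Suc n then cd_basis (a - 2^n) else (\<lambda>_. 0))"
  by (auto simp: cd_hi_def cd_basis_def fun_eq_iff)
lemma pair_lo: "a < 2^n \<Longrightarrow> cd_pair n (sc s (cd_basis a)) (\<lambda>_. 0) = sc s (cd_basis a)"
  by (auto simp: cd_pair_def cd_basis_def sc_def fun_eq_iff)
lemma pair_hi: "b < 2^n \<Longrightarrow> cd_pair n (\<lambda>_. 0) (sc s (cd_basis b)) = sc s (cd_basis (2^n + b))"
  by (auto simp: cd_pair_def cd_basis_def sc_def fun_eq_iff)

lemma neg_sc: "(\<lambda>i. - sc s u i) = sc (-s) u" by (auto simp: sc_def)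
lemma neg_z: "(\<lambda>i. - (0::real)) = (\<lambda>_. 0)" by simp
lemma sc_sc: "sc a (sc b u) = sc (a*b) u" by (auto simp: sc_def)
lemma sc1: "sc 1 u = u" by (auto simp: sc_def)

lemma conj_basis: "a < 2^n \<Longrightarrow> \<exists>s\<in>{1,-1}. cd_conj n (cd_basis a) = sc s (cd_basis a)"
proof (induction n arbitrary: a)
  case 0 then show ?case by (auto simp: sc_def cd_basis_def intro!: bexI[of _ 1])
next
  case (Suc n)
  show ?case
  proof (cases "a < 2^n")
    case True
    then obtain s where s: "s\<in>{1,-1}" "cd_conj n (cd_basis a) = sc s (cd_basis a)" using Suc by blast
    have "cd_conj (Suc n) (cd_basis a) = sc s (cd_basis a)"
      using True by (simp add: lo_basis hi_basis s pair_lo)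
    then show ?thesis using s by blast
  next
    case False
    have l: "cd_lo n (cd_basis a) = (\<lambda>_. 0)" using False by (simp add: lo_basis)
    have h: "(\<lambda>i. - cd_hi n (cd_basis a) i) = sc (-1) (cd_basis (a - 2^n))"
      using False Suc.prems by (simp add: hi_basis sc_def)
    have "cd_conj (Suc n) (cd_basis a) = cd_pair n (\<lambda>_. 0) (sc (-1) (cd_basis (a - 2^n)))"
      by (simp only: cd_conj.simps l h conj_z)
    also have "\<dots> = sc (-1) (cd_basis a)" using False Suc.prems by (simp add: pair_hi)
    finally show ?thesis by auto
  qed
qed

lemma mult_Suc: "cd_mult (Suc n) u v = cd_pair n
   (\<lambda>i. cd_mult n (cd_lo n u) (cd_lo n v) i - cd_mult n (cd_hi n v) (cd_conj n (cd_hi n u)) i)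
   (\<lambda>i. cd_mult n (cd_conj n (cd_lo n u)) (cd_hi n v) i + cd_mult n (cd_lo n v) (cd_hi n u) i)"
  by (simp add: Let_def)

lemma mult_basis: "a < 2^n \<Longrightarrow> b < 2^n \<Longrightarrow>
   \<exists>s\<in>{1,-1}. cd_mult n (cd_basis a) (cd_basis b) = sc s (cd_basis (xor a b))"
proof (induction n arbitrary: a b)
  case 0 then show ?case by (auto simp: sc_def cd_basis_def intro!: bexI[of _ 1])
next
  case (Suc n)
  consider "a < 2^n" "b < 2^n" | "a < 2^n" "\<not> b < 2^n" | "\<not> a < 2^n" "b < 2^n" | "\<not> a < 2^n" "\<not> b < 2^n" by blast
  then show ?case
  proof cases
    case 1
    then obtain s where s: "s\<in>{1,-1}" "cd_mult n (cd_basis a) (cd_basis b) = sc s (cd_basis (xor a b))" using Suc by blast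
    have la: "cd_lo n (cd_basis a) = cd_basis a" "cd_hi n (cd_basis a) = (\<lambda>_. 0)"
     and lb: "cd_lo n (cd_basis b) = cd_basis b" "cd_hi n (cd_basis b) = (\<lambda>_. 0)"
      using 1 by (auto simp: lo_basis hi_basis)
    have "cd_mult (Suc n) (cd_basis a) (cd_basis b) = cd_pair n (sc s (cd_basis (xor a b))) (\<lambda>_. 0)"
      by (simp only: mult_Suc la lb mult_z1 mult_z2 conj_z s) simp
    also have "\<dots> = sc s (cd_basis (xor a b))" using 1 xor_lt[of a n b] by (simp add: pair_lo)
    finally show ?thesis using s by blast
  next
    case 2
    define b' where "b' = b - 2^n"
    have b: "b = 2^n + b'" "b' < 2^n" using 2 Suc.prems by (auto simp: b'_def)
    obtain s1 where s1: "s1\<in>{1,-1}" "cd_conj n (cd_basis a) = sc s1 (cd_basis a)" using conj_basis 2 by blast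
    obtain s where s: "s\<in>{1,-1}" "cd_mult n (cd_basis a) (cd_basis b') = sc s (cd_basis (xor a b'))" using Suc 2 b by blast
    have la: "cd_lo n (cd_basis a) = cd_basis a" "cd_hi n (cd_basis a) = (\<lambda>_. 0)"
      using 2 by (auto simp: lo_basis hi_basis)
    have lb: "cd_lo n (cd_basis b) = (\<lambda>_. 0)" "cd_hi n (cd_basis b) = cd_basis b'"
      using 2 b by (auto simp: lo_basis hi_basis)
    have "cd_mult (Suc n) (cd_basis a) (cd_basis b) = cd_pair n (\<lambda>_. 0) (sc (s1*s) (cd_basis (xor a b')))"
      by (simp only: mult_Suc la lb mult_z1 mult_z2 conj_z s s1 mult_sc sc_sc) simp
    also have "\<dots> = sc (s1*s) (cd_basis (xor a b))" using 2 b xor_lt[of a n b'] by (simp add: pair_hi xor_hi2)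
    finally show ?thesis using s s1 by auto
  next
    case 3
    define a' where "a' = a - 2^n"
    have a: "a = 2^n + a'" "a' < 2^n" using 3 Suc.prems by (auto simp: a'_def)
    obtain s where s: "s\<in>{1,-1}" "cd_mult n (cd_basis b) (cd_basis a') = sc s (cd_basis (xor b a'))" using Suc 3 a by blast
    have la: "cd_lo n (cd_basis a) = (\<lambda>_. 0)" "cd_hi n (cd_basis a) = cd_basis a'"
      using 3 a by (auto simp: lo_basis hi_basis)
    have lb: "cd_lo n (cd_basis b) = cd_basis b" "cd_hi n (cd_basis b) = (\<lambda>_. 0)"
      using 3 by (auto simp: lo_basis hi_basis)
    have "cd_mult (Suc n) (cd_basis a) (cd_basis b) = cd_pair n (\<lambda>_. 0) (sc s (cd_basis (xor b a')))"
      by (simp only: mult_Suc la lb mult_z1 mult_z2 conj_z s) simp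
    also have "\<dots> = sc s (cd_basis (xor a b))" using 3 a xor_lt[of b n a'] xor_hi1[of a' n b]
      by (simp add: pair_hi xor.commute)
    finally show ?thesis using s by auto
  next
    case 4
    define a' where "a' = a - 2^n"
    have a: "a = 2^n + a'" "a' < 2^n" using 4 Suc.prems by (auto simp: a'_def)
    define b' where "b' = b - 2^n"
    have b: "b = 2^n + b'" "b' < 2^n" using 4 Suc.prems by (auto simp: b'_def)
    obtain s1 where s1: "s1\<in>{1,-1}" "cd_conj n (cd_basis a') = sc s1 (cd_basis a')" using conj_basis a by blast
    obtain s where s: "s\<in>{1,-1}" "cd_mult n (cd_basis b') (cd_basis a') = sc s (cd_basis (xor b' a'))" using Suc a b by blast
    have la: "cd_lo n (cd_basis a) = (\<lambda>_. 0)" "cd_hi n (cd_basis a) = cd_basis a'"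
      using 4 a by (auto simp: lo_basis hi_basis)
    have lb: "cd_lo n (cd_basis b) = (\<lambda>_. 0)" "cd_hi n (cd_basis b) = cd_basis b'"
      using 4 b by (auto simp: lo_basis hi_basis)
    have "cd_mult (Suc n) (cd_basis a) (cd_basis b) = cd_pair n (sc (-(s1*s)) (cd_basis (xor b' a'))) (\<lambda>_. 0)"
      by (simp only: mult_Suc la lb mult_z1 mult_z2 conj_z s s1 mult_sc sc_sc) (simp add: sc_def)
    also have "\<dots> = sc (-(s1*s)) (cd_basis (xor a b))" using 4 a b xor_lt[of b' n a'] xor_hi3[of a' n b']
      by (simp add: pair_lo xor.commute)
    finally show ?thesis using s s1 by auto
  qed
qed


lemma x1: "xor (a::nat) (xor a b) = b" by (simp flip: xor.assoc)
lemma x2: "xor (xor (a::nat) b) b = a" by (simp add: xor.assoc)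
lemma x3: "xor (a::nat) b = 0 \<longleftrightarrow> a = b" by (metis x1 xor.commute xor.right_neutral xor_self_eq)
lemma sort3: assumes "{a,b,c} = {a',b',c'}" "(a::nat) < b" "b < c" "a' < b'" "b' < c'"
  shows "a=a' \<and> b=b' \<and> c=c'"
proof -
  have m: "a \<in> {a',b',c'}" "b \<in> {a',b',c'}" "c \<in> {a',b',c'}" "a' \<in> {a,b,c}" "b' \<in> {a,b,c}" "c' \<in> {a,b,c}"
    using assms(1) by blast+
  have "a = a'" using m(1,4) assms(2-5) by auto
  moreover have "c = c'" using m(3,6) assms(2-5) by auto
  ultimately show ?thesis using m(2) assms(2-5) by auto
qed

lemma basis_prod_iff:
  assumes "a < 2^N" "b < 2^N"
  shows "(cd_mult N (cd_basis a) (cd_basis b) = cd_basis c \<or>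
          cd_mult N (cd_basis a) (cd_basis b) = (\<lambda>i. - cd_basis c i)) \<longleftrightarrow> c = xor a b"
proof -
  obtain s where s: "s \<in> {1,-1}" "cd_mult N (cd_basis a) (cd_basis b) = sc s (cd_basis (xor a b))"
    using mult_basis assms by blast
  show ?thesis
  proof
    assume h: "cd_mult N (cd_basis a) (cd_basis b) = cd_basis c \<or>
          cd_mult N (cd_basis a) (cd_basis b) = (\<lambda>i. - cd_basis c i)"
    then have "cd_mult N (cd_basis a) (cd_basis b) c \<noteq> 0" by (auto simp: cd_basis_def)
    then show "c = xor a b" using s by (auto simp: sc_def cd_basis_def split: if_splits)
  next
    assume "c = xor a b"
    then show "cd_mult N (cd_basis a) (cd_basis b) = cd_basis c \<or>
          cd_mult N (cd_basis a) (cd_basis b) = (\<lambda>i. - cd_basis c i)"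
      using s by (auto simp: sc_def)
  qed
qed

lemma dist_char: "distinguished_triple N T \<longleftrightarrow>
   (\<exists>a b c. T = {a,b,c} \<and> 1 \<le> a \<and> a < b \<and> b < c \<and> c \<le> 2^N - 1 \<and> c = xor a b)"
proof -
  have "1 \<le> a \<Longrightarrow> a < b \<Longrightarrow> b < c \<Longrightarrow> c \<le> 2^N - 1 \<Longrightarrow>
    (cd_mult N (cd_basis a) (cd_basis b) = cd_basis c \<or>
          cd_mult N (cd_basis a) (cd_basis b) = (\<lambda>i. - cd_basis c i)) \<longleftrightarrow> c = xor a b" for a b c
  proof (rule basis_prod_iff)
    assume h: "1 \<le> a" "a < b" "b < c" "c \<le> 2^N - 1"
    have "(0::nat) < 2^N" by simp
    then have "c < 2^N" using h(4) by linarith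
    then show "a < 2^N" "b < 2^N" using h by auto
  qed
  then show ?thesis unfolding distinguished_triple_def by metis
qed

definition ord3 :: "nat \<Rightarrow> nat \<Rightarrow> nat \<Rightarrow> bool" where
  "ord3 u v w \<longleftrightarrow> u+v=w \<or> u+w=v \<or> v+w=u"

definition cond6 :: "nat \<Rightarrow> nat \<Rightarrow> nat \<Rightarrow> bool" where
  "cond6 a b c \<longleftrightarrow> 1 \<le> a \<and> a < b \<and> b < c \<and> c \<le> 63 \<and> c = xor a b \<and> a + b \<noteq> c"

lemma def_char: "defective_triple 6 T \<longleftrightarrow> (\<exists>a b c. T = {a,b,c} \<and> cond6 a b c)"
  unfolding defective_triple_def dist_char cond6_def
  by (auto dest: sort3)

definition Vs :: "nat \<Rightarrow> nat set" where
  "Vs u = {v \<in> {1..63}. v \<noteq> u \<and> v < xor u v \<and> \<not> ord3 u v (xor u v)}"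

lemma xor63: "a \<le> 63 \<Longrightarrow> b \<le> 63 \<Longrightarrow> xor (a::nat) b \<le> 63"
  using xor_lt[of a 6 b] by simp

lemma dset: assumes u: "u \<in> {1..63}"
  shows "{T. defective_triple 6 T \<and> u \<in> T} = (\<lambda>v. {u, v, xor u v}) ` Vs u"
proof (intro equalityI subsetI)
  fix T assume "T \<in> {T. defective_triple 6 T \<and> u \<in> T}"
  then obtain a b c where T: "T = {a,b,c}" "cond6 a b c" "u \<in> T" by (auto simp: def_char)
  have c: "c = xor a b" "1 \<le> a" "a < b" "b < c" "c \<le> 63" "a + b \<noteq> c" using T(2) by (auto simp: cond6_def)
  have o: "\<not> ord3 a b c" "\<not> ord3 b a c" "\<not> ord3 c a b" using c by (auto simp: ord3_def)
  consider "u = a" | "u = b" | "u = c" using T by auto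
  then show "T \<in> (\<lambda>v. {u, v, xor u v}) ` Vs u"
  proof cases
    case 1
    have "b \<in> Vs u" using c o T 1 by (auto simp: Vs_def)
    moreover have "T = {u, b, xor u b}" using c T 1 by auto
    ultimately show ?thesis by blast
  next
    case 2
    then have "xor u a = c" using c by (simp add: xor.commute)
    have "a \<in> Vs u" using c o T 2 \<open>xor u a = c\<close> by (auto simp: Vs_def)
    moreover have "T = {u, a, xor u a}" using c T 2 \<open>xor u a = c\<close> by auto
    ultimately show ?thesis by blast
  next
    case 3
    then have "xor u a = b" using c xor.commute[of "xor a b" a] x1[of a b] by simp
    have "a \<in> Vs u" using c o T 3 \<open>xor u a = b\<close> by (auto simp: Vs_def ord3_def)
    moreover have "T = {u, a, xor u a}" using c T 3 \<open>xor u a = b\<close> by auto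
    ultimately show ?thesis by blast
  qed
next
  fix T assume "T \<in> (\<lambda>v. {u, v, xor u v}) ` Vs u"
  then obtain v where v: "v \<in> Vs u" "T = {u,v,xor u v}" by auto
  define w where "w = xor u v"
  have h: "1 \<le> v" "v \<le> 63" "v \<noteq> u" "v < w" "\<not> ord3 u v w" using v by (auto simp: Vs_def w_def)
  have w63: "w \<le> 63" using xor63 u h by (auto simp: w_def)
  have "xor u w = v" unfolding w_def by (rule x1)
  then have uw: "u \<noteq> w" using h(1) by auto
  have Tw: "T = {u,v,w}" using v(2) w_def by simp
  have "xor v w = u" unfolding w_def xor.left_commute[of v u v] by simp
  then have wx: "w = xor u v" "w = xor v u" "u = xor v w" using w_def by (simp_all add: xor.commute)
  have o: "u + v \<noteq> w" "u + w \<noteq> v" "v + w \<noteq> u" using h(5) by (auto simp: ord3_def)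
  consider "u < v" | "v < u" "u < w" | "w < u" using h uw by linarith
  then have "\<exists>a b c. T = {a,b,c} \<and> cond6 a b c"
  proof cases
    case 1
    have "cond6 u v w" unfolding cond6_def using 1 h u w63 wx(1) o by simp
    then show ?thesis using Tw by blast
  next
    case 2
    have "cond6 v u w" unfolding cond6_def using 2 h u w63 wx(2) o by (simp add: add.commute)
    moreover have "T = {v,u,w}" using Tw by blast
    ultimately show ?thesis by blast
  next
    case 3
    have "cond6 v w u" unfolding cond6_def using 3 h u w63 wx(3) o by simp
    moreover have "T = {v,w,u}" using Tw by blast
    ultimately show ?thesis by blast
  qed
  then show "T \<in> {T. defective_triple 6 T \<and> u \<in> T}" using v by (auto simp: def_char)
qed

lemma dinj: "inj_on (\<lambda>v. {u, v, xor u v}) (Vs u)"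
proof (rule inj_onI)
  fix v1 v2 assume a: "v1 \<in> Vs u" "v2 \<in> Vs u" "{u, v1, xor u v1} = {u, v2, xor u v2}"
  have h: "v1 \<noteq> u" "v2 \<noteq> u" "v1 < xor u v1" "v2 < xor u v2" using a by (auto simp: Vs_def)
  have "v2 \<in> {u, v1, xor u v1}" using a by blast
  then have "v2 = v1 \<or> v2 = xor u v1" using h by auto
  then show "v1 = v2"
  proof
    assume "v2 = xor u v1"
    then have "xor u v2 = v1" by (simp add: x1)
    then show ?thesis using h \<open>v2 = xor u v1\<close> by auto
  qed auto
qed

definition us :: "nat list" where "us = [1,2,3,4,5,6,7,8,9,10,11,12,13,14,15,16,17,18,19,20,21,22,23,24,25,26,27,28,29,30,31,32,33,34,35,36,37,38,39,40,41,42,43,44,45,46,47,48,49,50,51,52,53,54,55,56,57,58,59,60,61,62,63]"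

lemma set_us: "set us = {1..63}"
  unfolding us_def by (simp add: atLeastAtMost_upt eval_nat_numeral upt_conv_Cons)

definition cntV :: "nat \<Rightarrow> nat" where
  "cntV u = length (filter (\<lambda>v. v \<noteq> u \<and> v < xor u v \<and> \<not> ord3 u v (xor u v)) us)"

lemma card_Vs: "card (Vs u) = cntV u"
proof -
  have "Vs u = set (filter (\<lambda>v. v \<noteq> u \<and> v < xor u v \<and> \<not> ord3 u v (xor u v)) us)"
    by (auto simp: Vs_def set_us)
  moreover have "distinct (filter (\<lambda>v. v \<noteq> u \<and> v < xor u v \<and> \<not> ord3 u v (xor u v)) us)"
    by (rule distinct_filter) (simp add: us_def)
  ultimately show ?thesis unfolding cntV_def by (metis distinct_card)
qed

lemma defect_count_eq: "u \<in> {1..63} \<Longrightarrow> defect_count 6 u = cntV u"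
  unfolding defect_count_def dset by (simp add: card_image dinj card_Vs)


definition Xm :: "nat \<Rightarrow> nat set" where
  "Xm m = set (filter (\<lambda>i. bit m (i-2)) [2,3,4,5,6,7])"

definition kdv :: "nat \<Rightarrow> nat" where
  "kdv k = (if k = 1 \<or> k = 6 then 0 else if k = 2 \<or> k = 5 then 15 else 21)"

lemma cnt_1: "cntV 1 = 0" by (simp add: us_def cntV_def ord3_def)
lemma cnt_2: "cntV 2 = 0" by (simp add: us_def cntV_def ord3_def)
lemma cnt_3: "cntV 3 = 15" by (simp add: us_def cntV_def ord3_def)
lemma cnt_4: "cntV 4 = 0" by (simp add: us_def cntV_def ord3_def)
lemma cnt_5: "cntV 5 = 15" by (simp add: us_def cntV_def ord3_def)
lemma cnt_6: "cntV 6 = 15" by (simp add: us_def cntV_def ord3_def)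
lemma cnt_7: "cntV 7 = 21" by (simp add: us_def cntV_def ord3_def)
lemma cnt_8: "cntV 8 = 0" by (simp add: us_def cntV_def ord3_def)
lemma cnt_9: "cntV 9 = 15" by (simp add: us_def cntV_def ord3_def)
lemma cnt_10: "cntV 10 = 15" by (simp add: us_def cntV_def ord3_def)
lemma cnt_11: "cntV 11 = 21" by (simp add: us_def cntV_def ord3_def)
lemma cnt_12: "cntV 12 = 15" by (simp add: us_def cntV_def ord3_def)
lemma cnt_13: "cntV 13 = 21" by (simp add: us_def cntV_def ord3_def)
lemma cnt_14: "cntV 14 = 21" by (simp add: us_def cntV_def ord3_def)
lemma cnt_15: "cntV 15 = 21" by (simp add: us_def cntV_def ord3_def)
lemma cnt_16: "cntV 16 = 0" by (simp add: us_def cntV_def ord3_def)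
lemma cnt_17: "cntV 17 = 15" by (simp add: us_def cntV_def ord3_def)
lemma cnt_18: "cntV 18 = 15" by (simp add: us_def cntV_def ord3_def)
lemma cnt_19: "cntV 19 = 21" by (simp add: us_def cntV_def ord3_def)
lemma cnt_20: "cntV 20 = 15" by (simp add: us_def cntV_def ord3_def)
lemma cnt_21: "cntV 21 = 21" by (simp add: us_def cntV_def ord3_def)
lemma cnt_22: "cntV 22 = 21" by (simp add: us_def cntV_def ord3_def)
lemma cnt_23: "cntV 23 = 21" by (simp add: us_def cntV_def ord3_def)
lemma cnt_24: "cntV 24 = 15" by (simp add: us_def cntV_def ord3_def)
lemma cnt_25: "cntV 25 = 21" by (simp add: us_def cntV_def ord3_def)
lemma cnt_26: "cntV 26 = 21" by (simp add: us_def cntV_def ord3_def)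
lemma cnt_27: "cntV 27 = 21" by (simp add: us_def cntV_def ord3_def)
lemma cnt_28: "cntV 28 = 21" by (simp add: us_def cntV_def ord3_def)
lemma cnt_29: "cntV 29 = 21" by (simp add: us_def cntV_def ord3_def)
lemma cnt_30: "cntV 30 = 21" by (simp add: us_def cntV_def ord3_def)
lemma cnt_31: "cntV 31 = 15" by (simp add: us_def cntV_def ord3_def)
lemma cnt_32: "cntV 32 = 0" by (simp add: us_def cntV_def ord3_def)
lemma cnt_33: "cntV 33 = 15" by (simp add: us_def cntV_def ord3_def)
lemma cnt_34: "cntV 34 = 15" by (simp add: us_def cntV_def ord3_def)
lemma cnt_35: "cntV 35 = 21" by (simp add: us_def cntV_def ord3_def)
lemma cnt_36: "cntV 36 = 15" by (simp add: us_def cntV_def ord3_def)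
lemma cnt_37: "cntV 37 = 21" by (simp add: us_def cntV_def ord3_def)
lemma cnt_38: "cntV 38 = 21" by (simp add: us_def cntV_def ord3_def)
lemma cnt_39: "cntV 39 = 21" by (simp add: us_def cntV_def ord3_def)
lemma cnt_40: "cntV 40 = 15" by (simp add: us_def cntV_def ord3_def)
lemma cnt_41: "cntV 41 = 21" by (simp add: us_def cntV_def ord3_def)
lemma cnt_42: "cntV 42 = 21" by (simp add: us_def cntV_def ord3_def)
lemma cnt_43: "cntV 43 = 21" by (simp add: us_def cntV_def ord3_def)
lemma cnt_44: "cntV 44 = 21" by (simp add: us_def cntV_def ord3_def)
lemma cnt_45: "cntV 45 = 21" by (simp add: us_def cntV_def ord3_def)
lemma cnt_46: "cntV 46 = 21" by (simp add: us_def cntV_def ord3_def)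
lemma cnt_47: "cntV 47 = 15" by (simp add: us_def cntV_def ord3_def)
lemma cnt_48: "cntV 48 = 15" by (simp add: us_def cntV_def ord3_def)
lemma cnt_49: "cntV 49 = 21" by (simp add: us_def cntV_def ord3_def)
lemma cnt_50: "cntV 50 = 21" by (simp add: us_def cntV_def ord3_def)
lemma cnt_51: "cntV 51 = 21" by (simp add: us_def cntV_def ord3_def)
lemma cnt_52: "cntV 52 = 21" by (simp add: us_def cntV_def ord3_def)
lemma cnt_53: "cntV 53 = 21" by (simp add: us_def cntV_def ord3_def)
lemma cnt_54: "cntV 54 = 21" by (simp add: us_def cntV_def ord3_def)
lemma cnt_55: "cntV 55 = 15" by (simp add: us_def cntV_def ord3_def)
lemma cnt_56: "cntV 56 = 21" by (simp add: us_def cntV_def ord3_def)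
lemma cnt_57: "cntV 57 = 21" by (simp add: us_def cntV_def ord3_def)
lemma cnt_58: "cntV 58 = 21" by (simp add: us_def cntV_def ord3_def)
lemma cnt_59: "cntV 59 = 15" by (simp add: us_def cntV_def ord3_def)
lemma cnt_60: "cntV 60 = 21" by (simp add: us_def cntV_def ord3_def)
lemma cnt_61: "cntV 61 = 15" by (simp add: us_def cntV_def ord3_def)
lemma cnt_62: "cntV 62 = 15" by (simp add: us_def cntV_def ord3_def)
lemma cnt_63: "cntV 63 = 0" by (simp add: us_def cntV_def ord3_def)

lemma cnt_1': "cntV (Suc 0) = 0" using cnt_1 by simp

lemmas cnts = cnt_1' cnt_1 cnt_2 cnt_3 cnt_4 cnt_5 cnt_6 cnt_7 cnt_8 cnt_9 cnt_10 cnt_11 cnt_12 cnt_13 cnt_14 cnt_15 cnt_16 cnt_17 cnt_18 cnt_19 cnt_20 cnt_21 cnt_22 cnt_23 cnt_24 cnt_25 cnt_26 cnt_27 cnt_28 cnt_29 cnt_30 cnt_31 cnt_32 cnt_33 cnt_34 cnt_35 cnt_36 cnt_37 cnt_38 cnt_39 cnt_40 cnt_41 cnt_42 cnt_43 cnt_44 cnt_45 cnt_46 cnt_47 cnt_48 cnt_49 cnt_50 cnt_51 cnt_52 cnt_53 cnt_54 cnt_55 cnt_56 cnt_57 cnt_58 cnt_59 cnt_60 cnt_61 cnt_62 cnt_63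

lemma all_counts: "list_all (\<lambda>u. cntV u = kdv (card (Xm u))) us"
  unfolding us_def by (simp add: cnts Xm_def kdv_def bit_0)

lemma count_kdv: "u \<in> {1..63} \<Longrightarrow> defect_count 6 u = kdv (card (Xm u))"
  using all_counts defect_count_eq[of u] unfolding list_all_iff set_us by auto

lemma kind_eq: "kind d = {u \<in> {1..63}. kdv (card (Xm u)) = d}"
  unfolding kind_def cd_units_def using count_kdv by auto

lemma sep_us: "{u \<in> {1..63}. P u} = set (filter P us)"
  by (auto simp: set_us)

definition K15 :: "nat list" where "K15 = [3,5,6,9,10,12,17,18,20,24,31,33,34,36,40,47,48,55,59,61,62]"

lemma kind15: "kind 15 = set K15"
  unfolding kind_eq sep_us by (simp add: us_def Xm_def kdv_def K15_def bit_0)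

lemma card_kinds: "card (kind 21) = 35" "card (kind 15) = 21" "card (kind 0) = 7"
  unfolding kind_eq sep_us by (simp_all add: us_def Xm_def kdv_def bit_0)

lemma kinds_union: "kind 21 \<union> kind 15 \<union> kind 0 = cd_units 6"
  unfolding kind_eq cd_units_def by (auto simp: kdv_def)


definition pairsof :: "nat set \<Rightarrow> nat set set" where
  "pairsof S = {P. P \<subseteq> S \<and> card P = 2}"

abbreviation Mp :: "nat set set" where "Mp \<equiv> pairsof {1..7}"
definition Ml :: "nat set set set" where "Ml = pairsof ` G2_lines 7"

lemma pairsof_3: assumes "a\<noteq>b" "b\<noteq>c" "a\<noteq>c" shows "pairsof {a,b,c} = {{a,b},{b,c},{a,c}}"
proof (intro equalityI subsetI)
  fix P assume "P \<in> pairsof {a,b,c}"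
  then obtain x y where P: "P = {x,y}" "x\<noteq>y" "{x,y} \<subseteq> {a,b,c}" by (auto simp: pairsof_def card_2_iff)
  then show "P \<in> {{a,b},{b,c},{a,c}}" by (auto simp: insert_commute)
next
  fix P assume "P \<in> {{a,b},{b,c},{a,c}}"
  then show "P \<in> pairsof {a,b,c}" using assms by (auto simp: pairsof_def)
qed

lemma Ml_elim: assumes "l \<in> Ml"
  obtains a b c where "a\<noteq>b" "b\<noteq>c" "a\<noteq>c" "{a,b,c} \<subseteq> {1..7}" "l = pairsof {a,b,c}"
  using assms unfolding Ml_def G2_lines_def by (auto simp: card_3_iff)

lemma Ml_intro: "a\<noteq>b \<Longrightarrow> b\<noteq>c \<Longrightarrow> a\<noteq>c \<Longrightarrow> {a,b,c} \<subseteq> {1..7} \<Longrightarrow> pairsof {a,b,c} \<in> Ml"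
  unfolding Ml_def G2_lines_def by (rule imageI) auto

lemma pairsof_mono: "T \<subseteq> S \<Longrightarrow> pairsof T \<subseteq> pairsof S"
  by (auto simp: pairsof_def)

lemma Ml_sub: assumes "l \<in> Ml" shows "l \<subseteq> Mp"
proof -
  obtain a b c where "{a,b,c} \<subseteq> {1..7}" "l = pairsof {a,b,c}" using assms by (rule Ml_elim)
  then show ?thesis using pairsof_mono by blast
qed

lemma Mp_mem: "P \<in> Mp \<longleftrightarrow> (\<exists>i j. P = {i,j} \<and> i \<noteq> j \<and> i \<in> {1..7} \<and> j \<in> {1..7})"
  by (auto simp: pairsof_def card_2_iff; blast)

lemma pair_in_Mp: "i \<noteq> j \<Longrightarrow> i \<in> {1..7} \<Longrightarrow> j \<in> {1..7} \<Longrightarrow> {i,j} \<in> Mp"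
  by (auto simp: pairsof_def)

lemma card_pair_int: assumes "card p = 2" "card q = 2" "p \<noteq> q" "p \<inter> q \<noteq> {}"
  shows "card (p \<union> q) = 3"
proof -
  have f: "finite p" "finite q" using assms by (auto intro: card_ge_0_finite)
  have "card (p \<inter> q) \<noteq> 0" using assms f by auto
  moreover have "card (p \<inter> q) < 2"
  proof (rule ccontr)
    assume "\<not> card (p \<inter> q) < 2"
    then have "card (p \<inter> q) = card p" "card (p \<inter> q) = card q"
      using assms card_mono[OF f(1), of "p \<inter> q"] card_mono[OF f(2), of "p \<inter> q"] by auto
    then have "p \<inter> q = p" "p \<inter> q = q"
      using card_subset_eq[OF f(1), of "p\<inter>q"] card_subset_eq[OF f(2), of "p\<inter>q"] by auto
    then show False using assms by auto
  qed
  ultimately have "card (p \<inter> q) = 1" by linarith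
  then show ?thesis using card_Un_Int[OF f] assms by simp
qed

lemma collinear_M: assumes "p \<in> Mp" "q \<in> Mp"
  shows "collinear Ml (\<in>) p q \<longleftrightarrow> p \<inter> q \<noteq> {}"
proof
  assume "collinear Ml (\<in>) p q"
  then obtain l where l: "l \<in> Ml" "p \<in> l" "q \<in> l" by (auto simp: collinear_def)
  then obtain a b c where abc: "a\<noteq>b" "b\<noteq>c" "a\<noteq>c" "l = pairsof {a,b,c}" by (auto elim: Ml_elim)
  show "p \<inter> q \<noteq> {}"
  proof
    assume d: "p \<inter> q = {}"
    have "p \<subseteq> {a,b,c}" "q \<subseteq> {a,b,c}" "card p = 2" "card q = 2" using l abc by (auto simp: pairsof_def)
    then have "card (p \<union> q) = 4" using d by (subst card_Un_disjoint) (auto intro: card_ge_0_finite)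
    moreover have "card (p \<union> q) \<le> 3" using \<open>p \<subseteq> {a,b,c}\<close> \<open>q \<subseteq> {a,b,c}\<close>
      by (metis Un_least card_mono finite.emptyI finite.insertI card_3_iff abc(1-3) le_refl)
    ultimately show False by simp
  qed
next
  assume pq: "p \<inter> q \<noteq> {}"
  have cp: "card p = 2" "card q = 2" "p \<subseteq> {1..7}" "q \<subseteq> {1..7}" using assms by (auto simp: pairsof_def)
  show "collinear Ml (\<in>) p q"
  proof (cases "p = q")
    case True
    have "card ({1..7::nat} - p) = 5" using cp by (simp add: card_Diff_subset card_ge_0_finite)
    then obtain k where k: "k \<in> {1..7}" "k \<notin> p" by (metis Diff_iff card.empty ex_in_conv zero_neq_numeral)
    obtain i j where ij: "p = {i,j}" "i\<noteq>j" using cp card_2_iff by metis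
    have "pairsof {i,j,k} \<in> Ml" using ij k cp by (intro Ml_intro) auto
    moreover have "p \<in> pairsof {i,j,k}" using ij cp by (auto simp: pairsof_def)
    ultimately show ?thesis using True by (auto simp: collinear_def)
  next
    case False
    have c3: "card (p \<union> q) = 3" using card_pair_int cp False pq by blast
    then obtain a b c where abc: "p \<union> q = {a,b,c}" "a\<noteq>b" "b\<noteq>c" "a\<noteq>c" by (auto simp: card_3_iff)
    have s7: "{a,b,c} \<subseteq> {1..7}" using abc(1) cp(3,4) by blast
    have "pairsof {a,b,c} \<in> Ml" using abc(2-4) s7 by (rule Ml_intro)
    moreover have "p \<in> pairsof {a,b,c}" "q \<in> pairsof {a,b,c}" unfolding pairsof_def using abc(1) cp(1,2) by blast+
    ultimately show ?thesis by (auto simp: collinear_def)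
  qed
qed

definition HX :: "nat set \<Rightarrow> nat set set" where
  "HX X = {P \<in> Mp. \<forall>i\<in>P. \<forall>j\<in>P. (i\<in>X \<longleftrightarrow> j\<in>X)}"

lemma HX_mem: "i \<noteq> j \<Longrightarrow> i \<in> {1..7} \<Longrightarrow> j \<in> {1..7} \<Longrightarrow> {i,j} \<in> HX X \<longleftrightarrow> (i\<in>X \<longleftrightarrow> j\<in>X)"
  unfolding HX_def using pair_in_Mp by auto

lemma HX_sub: "HX X \<subseteq> Mp" by (auto simp: HX_def)

lemma HX_split: "HX X = pairsof ({1..7} \<inter> X) \<union> pairsof ({1..7} - X)"
proof (intro equalityI subsetI)
  fix P assume "P \<in> HX X"
  then obtain i j where P: "P = {i,j}" "i\<noteq>j" "i \<in> {1..7}" "j \<in> {1..7}" "i\<in>X \<longleftrightarrow> j\<in>X"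
    unfolding HX_def Mp_mem by blast
  then show "P \<in> pairsof ({1..7} \<inter> X) \<union> pairsof ({1..7} - X)" by (auto simp: pairsof_def)
next
  fix P assume "P \<in> pairsof ({1..7} \<inter> X) \<union> pairsof ({1..7} - X)"
  then show "P \<in> HX X" unfolding HX_def by (auto simp: pairsof_def)
qed

lemma card_pairsof: "finite S \<Longrightarrow> card (pairsof S) = card S choose 2"
  unfolding pairsof_def by (rule n_subsets)

lemma card_HX: "card (HX X) = (card ({1..7} \<inter> X) choose 2) + (card ({1..7} - X) choose 2)"
proof -
  have "P = {}" if "P \<in> pairsof ({1..7} \<inter> X)" "P \<in> pairsof ({1..7} - X)" for P
  proof -
    have "P \<subseteq> X" "P \<subseteq> - X" using that unfolding pairsof_def by auto
    then show ?thesis by auto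
  qed
  moreover have "{} \<notin> pairsof S" for S by (simp add: pairsof_def)
  ultimately have "pairsof ({1..7} \<inter> X) \<inter> pairsof ({1..7} - X) = {}"
    by blast
  moreover have "finite (pairsof S)" if "finite S" for S
    using that by (rule rev_finite_subset[OF finite_Pow_iff[THEN iffD2]]) (auto simp: pairsof_def)
  ultimately show ?thesis unfolding HX_split
    by (subst card_Un_disjoint) (simp_all add: card_pairsof)
qed


definition good3 :: "nat set set \<Rightarrow> nat \<Rightarrow> nat \<Rightarrow> nat \<Rightarrow> bool" where
 "good3 H a b c \<longleftrightarrow> ({a,b}\<in>H \<and> {b,c}\<in>H \<and> {a,c}\<in>H) \<or> ({a,b}\<in>H \<and> {b,c}\<notin>H \<and> {a,c}\<notin>H) \<or>
    ({a,b}\<notin>H \<and> {b,c}\<in>H \<and> {a,c}\<notin>H) \<or> ({a,b}\<notin>H \<and> {b,c}\<notin>H \<and> {a,c}\<in>H)"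

lemma card3_one: assumes "x\<noteq>y" "y\<noteq>z" "x\<noteq>z"
  shows "card ({x,y,z} \<inter> H) = 1 \<longleftrightarrow> (x\<in>H \<and> y\<notin>H \<and> z\<notin>H) \<or> (x\<notin>H \<and> y\<in>H \<and> z\<notin>H) \<or> (x\<notin>H \<and> y\<notin>H \<and> z\<in>H)"
  using assms by (cases "x\<in>H"; cases "y\<in>H"; cases "z\<in>H") (auto simp: Int_insert_left)

lemma line_cond: assumes "a\<noteq>b" "b\<noteq>c" "a\<noteq>c" "{a,b,c} \<subseteq> {1..7}"
  shows "({p\<in>Mp. p \<in> pairsof {a,b,c}} \<subseteq> H \<or> card {p\<in>Mp. p \<in> pairsof {a,b,c} \<and> p\<in>H} = 1) \<longleftrightarrow> good3 H a b c"
proof -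
  have l: "pairsof {a,b,c} \<subseteq> Mp" using assms(4) by (rule pairsof_mono)
  have e1: "{p\<in>Mp. p \<in> pairsof {a,b,c}} = {{a,b},{b,c},{a,c}}" using l pairsof_3[OF assms(1-3)] by auto
  have e2: "{p\<in>Mp. p \<in> pairsof {a,b,c} \<and> p\<in>H} = {{a,b},{b,c},{a,c}} \<inter> H" using l pairsof_3[OF assms(1-3)] by auto
  have d: "{a,b} \<noteq> {b,c}" "{b,c} \<noteq> {a,c}" "{a,b} \<noteq> {a,c}" using assms(1-3) by (auto simp: doubleton_eq_iff)
  show ?thesis unfolding e1 e2 card3_one[OF d(1) d(2) d(3)] good3_def by auto
qed

lemma hyp_M: "geometric_hyperplane Mp Ml (\<in>) H \<longleftrightarrow> H \<subset> Mp \<and>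
   (\<forall>a b c. a\<noteq>b \<longrightarrow> b\<noteq>c \<longrightarrow> a\<noteq>c \<longrightarrow> {a,b,c} \<subseteq> {1..7} \<longrightarrow> good3 H a b c)"
proof -
  have "(\<forall>l\<in>Ml. {p\<in>Mp. p \<in> l} \<subseteq> H \<or> card {p\<in>Mp. p \<in> l \<and> p\<in>H} = 1) \<longleftrightarrow>
        (\<forall>a b c. a\<noteq>b \<longrightarrow> b\<noteq>c \<longrightarrow> a\<noteq>c \<longrightarrow> {a,b,c} \<subseteq> {1..7} \<longrightarrow> good3 H a b c)"
  proof (intro iffI allI impI ballI)
    fix a b c :: nat assume h: "\<forall>l\<in>Ml. {p\<in>Mp. p \<in> l} \<subseteq> H \<or> card {p\<in>Mp. p \<in> l \<and> p\<in>H} = 1"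
      and abc: "a\<noteq>b" "b\<noteq>c" "a\<noteq>c" "{a,b,c} \<subseteq> {1..7}"
    have "pairsof {a,b,c} \<in> Ml" using abc by (rule Ml_intro)
    then show "good3 H a b c" using h line_cond[OF abc] by blast
  next
    fix l assume h: "\<forall>a b c. a\<noteq>b \<longrightarrow> b\<noteq>c \<longrightarrow> a\<noteq>c \<longrightarrow> {a,b,c} \<subseteq> {1..7} \<longrightarrow> good3 H a b c"
      and l: "l \<in> Ml"
    obtain a b c where abc: "a\<noteq>b" "b\<noteq>c" "a\<noteq>c" "{a,b,c} \<subseteq> {1..7}" "l = pairsof {a,b,c}"
      using l by (rule Ml_elim)
    show "{p\<in>Mp. p \<in> l} \<subseteq> H \<or> card {p\<in>Mp. p \<in> l \<and> p\<in>H} = 1"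
      unfolding abc(5) line_cond[OF abc(1-4)] using h abc(1-4) by blast
  qed
  then show ?thesis unfolding geometric_hyperplane_def by blast
qed

definition NE :: "nat set set" where "NE = {X. X \<subseteq> {2..7} \<and> X \<noteq> {}}"

lemma HX_hyp: assumes "X \<in> NE" shows "geometric_hyperplane Mp Ml (\<in>) (HX X)"
proof -
  from assms obtain x where x: "x \<in> X" unfolding NE_def by blast
  then have x2: "x \<in> {2..7}" using assms unfolding NE_def by blast
  have "1 \<notin> X" using assms by (auto simp: NE_def)
  then have "{1,x} \<notin> HX X" "{1,x} \<in> Mp" using x x2 HX_mem[of 1 x X] pair_in_Mp[of 1 x] by auto
  then have ps: "HX X \<subset> Mp" using HX_sub by blast
  have "good3 (HX X) a b c" if "a\<noteq>b" "b\<noteq>c" "a\<noteq>c" "{a,b,c} \<subseteq> {1..7}" for a b c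
    using that HX_mem[of a b X] HX_mem[of b c X] HX_mem[of a c X] unfolding good3_def by auto
  then show ?thesis unfolding hyp_M using ps by blast
qed

lemma hyp_HX: assumes "geometric_hyperplane Mp Ml (\<in>) H" shows "\<exists>X\<in>NE. H = HX X"
proof -
  have H: "H \<subset> Mp" "\<And>a b c. a\<noteq>b \<Longrightarrow> b\<noteq>c \<Longrightarrow> a\<noteq>c \<Longrightarrow> {a,b,c} \<subseteq> {1..7} \<Longrightarrow> good3 H a b c"
    using assms unfolding hyp_M by blast+
  define X where "X = {i\<in>{2..7}. {1,i} \<notin> H}"
  have X1: "1 \<notin> X" by (auto simp: X_def)
  have key: "{i,j} \<in> H \<longleftrightarrow> (i\<in>X \<longleftrightarrow> j\<in>X)" if ij: "i\<noteq>j" "i \<in> {1..7}" "j \<in> {1..7}" for i j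
  proof -
    consider "i = 1" | "j = 1" | "i \<noteq> 1" "j \<noteq> 1" by blast
    then show ?thesis
    proof cases
      case 1 then show ?thesis using ij X1 by (auto simp: X_def)
    next
      case 2 then show ?thesis using ij X1 by (auto simp: X_def insert_commute)
    next
      case 3
      have "good3 H 1 i j" using H(2)[of 1 i j] 3 ij by auto
      moreover have "i \<in> X \<longleftrightarrow> {1,i} \<notin> H" "j \<in> X \<longleftrightarrow> {1,j} \<notin> H" using 3 ij by (auto simp: X_def)
      ultimately show ?thesis unfolding good3_def by blast
    qed
  qed
  have HeqX: "H = HX X"
  proof (intro equalityI subsetI)
    fix P assume "P \<in> H"
    then have "P \<in> Mp" using H by blast
    then obtain i j where "P = {i,j}" "i \<noteq> j" "i \<in> {1..7}" "j \<in> {1..7}" unfolding Mp_mem by blast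
    then show "P \<in> HX X" using key HX_mem \<open>P \<in> H\<close> by blast
  next
    fix P assume "P \<in> HX X"
    then have "P \<in> Mp" using HX_sub by blast
    then obtain i j where "P = {i,j}" "i \<noteq> j" "i \<in> {1..7}" "j \<in> {1..7}" unfolding Mp_mem by blast
    then show "P \<in> H" using key HX_mem \<open>P \<in> HX X\<close> by blast
  qed
  have "X \<noteq> {}"
  proof
    assume "X = {}"
    have "P \<in> H" if PM: "P \<in> Mp" for P
    proof -
      obtain i j where "P = {i,j}" "i \<noteq> j" "i \<in> {1..7}" "j \<in> {1..7}" using PM unfolding Mp_mem by blast
      then show ?thesis using key \<open>X = {}\<close> by simp
    qed
    then have "Mp \<subseteq> H" by blast
    then show False using H by blast
  qed
  then have "X \<in> NE" by (auto simp: NE_def X_def)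
  then show ?thesis using HeqX by blast
qed

lemma hyps_M: "hyperplanes Mp Ml (\<in>) = HX ` NE"
  unfolding hyperplanes_def using HX_hyp hyp_HX by blast

lemma HX_inj: "inj_on HX {X. X \<subseteq> {2..7}}"
proof (rule inj_onI)
  fix X Y assume a: "X \<in> {X. X \<subseteq> {2..7}}" "Y \<in> {X. X \<subseteq> {2..7}}" "HX X = HX Y"
  have "i \<in> X \<longleftrightarrow> i \<in> Y" for i
  proof (cases "i \<in> {2..7}")
    case True
    then have "i \<in> X \<longleftrightarrow> {1,i} \<notin> HX X" "i \<in> Y \<longleftrightarrow> {1,i} \<notin> HX Y"
      using a(1,2) HX_mem[of 1 i X] HX_mem[of 1 i Y] by auto
    then show ?thesis using a(3) by simp
  next
    case False then show ?thesis using a by auto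
  qed
  then show "X = Y" by auto
qed

lemma NE_sub: "NE \<subseteq> {X. X \<subseteq> {2..7}}" by (auto simp: NE_def)

lemma HX_inter_eq: "HX A \<inter> HX B = HX C \<inter> HX E \<longleftrightarrow>
   (\<forall>i j. i\<noteq>j \<longrightarrow> i\<in>{1..7} \<longrightarrow> j\<in>{1..7} \<longrightarrow>
      (((i\<in>A) = (j\<in>A)) \<and> ((i\<in>B) = (j\<in>B)) \<longleftrightarrow> ((i\<in>C) = (j\<in>C)) \<and> ((i\<in>E) = (j\<in>E))))"
proof
  assume h: "HX A \<inter> HX B = HX C \<inter> HX E"
  show "\<forall>i j. i\<noteq>j \<longrightarrow> i\<in>{1..7} \<longrightarrow> j\<in>{1..7} \<longrightarrow>
      (((i\<in>A) = (j\<in>A)) \<and> ((i\<in>B) = (j\<in>B)) \<longleftrightarrow> ((i\<in>C) = (j\<in>C)) \<and> ((i\<in>E) = (j\<in>E)))"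
  proof (intro allI impI)
    fix i j :: nat assume ij: "i\<noteq>j" "i\<in>{1..7}" "j\<in>{1..7}"
    have "{i,j} \<in> HX A \<inter> HX B \<longleftrightarrow> {i,j} \<in> HX C \<inter> HX E" using h by simp
    then show "((i\<in>A) = (j\<in>A)) \<and> ((i\<in>B) = (j\<in>B)) \<longleftrightarrow> ((i\<in>C) = (j\<in>C)) \<and> ((i\<in>E) = (j\<in>E))"
      using HX_mem[OF ij, of A] HX_mem[OF ij, of B] HX_mem[OF ij, of C] HX_mem[OF ij, of E] by simp
  qed
next
  assume h: "\<forall>i j. i\<noteq>j \<longrightarrow> i\<in>{1..7} \<longrightarrow> j\<in>{1..7} \<longrightarrow>
      (((i\<in>A) = (j\<in>A)) \<and> ((i\<in>B) = (j\<in>B)) \<longleftrightarrow> ((i\<in>C) = (j\<in>C)) \<and> ((i\<in>E) = (j\<in>E)))"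
  show "HX A \<inter> HX B = HX C \<inter> HX E"
  proof (intro equalityI subsetI)
    fix P assume P: "P \<in> HX A \<inter> HX B"
    then have "P \<in> Mp" using HX_sub by blast
    then obtain i j where ij: "P = {i,j}" "i \<noteq> j" "i \<in> {1..7}" "j \<in> {1..7}" unfolding Mp_mem by blast
    show "P \<in> HX C \<inter> HX E"
      using P h[rule_format, OF ij(2-4)] HX_mem[OF ij(2-4), of A] HX_mem[OF ij(2-4), of B]
        HX_mem[OF ij(2-4), of C] HX_mem[OF ij(2-4), of E] unfolding ij(1) by simp
  next
    fix P assume P: "P \<in> HX C \<inter> HX E"
    then have "P \<in> Mp" using HX_sub by blast
    then obtain i j where ij: "P = {i,j}" "i \<noteq> j" "i \<in> {1..7}" "j \<in> {1..7}" unfolding Mp_mem by blast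
    show "P \<in> HX A \<inter> HX B"
      using P h[rule_format, OF ij(2-4)] HX_mem[OF ij(2-4), of A] HX_mem[OF ij(2-4), of B]
        HX_mem[OF ij(2-4), of C] HX_mem[OF ij(2-4), of E] unfolding ij(1) by simp
  qed
qed

definition symd :: "nat set \<Rightarrow> nat set \<Rightarrow> nat set" where "symd X Y = (X - Y) \<union> (Y - X)"

lemma vkey: assumes X: "X \<in> NE" and Y: "Y \<in> NE" and XY: "X \<noteq> Y" and Z: "Z \<in> NE"
  shows "(HX X \<inter> HX Y = HX X \<inter> HX Z \<and> HX X \<inter> HX Z = HX Y \<inter> HX Z) \<longleftrightarrow> Z = symd X Y"
proof
  assume "HX X \<inter> HX Y = HX X \<inter> HX Z \<and> HX X \<inter> HX Z = HX Y \<inter> HX Z"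
  then have c1: "\<And>i j. i\<noteq>j \<Longrightarrow> i\<in>{1..7} \<Longrightarrow> j\<in>{1..7} \<Longrightarrow>
      (((i\<in>X) = (j\<in>X)) \<and> ((i\<in>Y) = (j\<in>Y)) \<longleftrightarrow> ((i\<in>X) = (j\<in>X)) \<and> ((i\<in>Z) = (j\<in>Z)))"
   and c2: "\<And>i j. i\<noteq>j \<Longrightarrow> i\<in>{1..7} \<Longrightarrow> j\<in>{1..7} \<Longrightarrow>
      (((i\<in>X) = (j\<in>X)) \<and> ((i\<in>Z) = (j\<in>Z)) \<longleftrightarrow> ((i\<in>Y) = (j\<in>Y)) \<and> ((i\<in>Z) = (j\<in>Z)))"
    unfolding HX_inter_eq by blast+
  have s: "X \<subseteq> {2..7}" "Y \<subseteq> {2..7}" "Z \<subseteq> {2..7}" using X Y Z by (auto simp: NE_def)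
  then have n1: "1 \<notin> X" "1 \<notin> Y" "1 \<notin> Z" by auto
  obtain k where k: "k \<in> {2..7}" "(k \<in> X) \<noteq> (k \<in> Y)" using XY s by blast
  have "i \<in> Z \<longleftrightarrow> i \<in> symd X Y" for i
  proof (cases "i \<in> {2..7}")
    case False then show ?thesis using s by (auto simp: symd_def)
  next
    case True
    have a1: "(((1\<in>X) = (k\<in>X)) \<and> ((1\<in>Y) = (k\<in>Y)) \<longleftrightarrow> ((1\<in>X) = (k\<in>X)) \<and> ((1\<in>Z) = (k\<in>Z)))"
         "(((1\<in>X) = (k\<in>X)) \<and> ((1\<in>Z) = (k\<in>Z)) \<longleftrightarrow> ((1\<in>Y) = (k\<in>Y)) \<and> ((1\<in>Z) = (k\<in>Z)))"
      using c1[of 1 k] c2[of 1 k] k by auto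
    show ?thesis
    proof (cases "i = k")
      case True then show ?thesis using a1 n1 k by (auto simp: symd_def)
    next
      case False
      have a2: "(((1\<in>X) = (i\<in>X)) \<and> ((1\<in>Y) = (i\<in>Y)) \<longleftrightarrow> ((1\<in>X) = (i\<in>X)) \<and> ((1\<in>Z) = (i\<in>Z)))"
         "(((1\<in>X) = (i\<in>X)) \<and> ((1\<in>Z) = (i\<in>Z)) \<longleftrightarrow> ((1\<in>Y) = (i\<in>Y)) \<and> ((1\<in>Z) = (i\<in>Z)))"
        using c1[of 1 i] c2[of 1 i] \<open>i \<in> {2..7}\<close> by auto
      have a3: "(((i\<in>X) = (k\<in>X)) \<and> ((i\<in>Y) = (k\<in>Y)) \<longleftrightarrow> ((i\<in>X) = (k\<in>X)) \<and> ((i\<in>Z) = (k\<in>Z)))"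
         "(((i\<in>X) = (k\<in>X)) \<and> ((i\<in>Z) = (k\<in>Z)) \<longleftrightarrow> ((i\<in>Y) = (k\<in>Y)) \<and> ((i\<in>Z) = (k\<in>Z)))"
        using c1[of i k] c2[of i k] \<open>i \<in> {2..7}\<close> k False by auto
      show ?thesis using a1 a2 a3 n1 k unfolding symd_def by auto
    qed
  qed
  then show "Z = symd X Y" by blast
next
  assume "Z = symd X Y"
  then show "HX X \<inter> HX Y = HX X \<inter> HX Z \<and> HX X \<inter> HX Z = HX Y \<inter> HX Z"
    unfolding HX_inter_eq symd_def by blast
qed

lemma symd_NE: "X \<in> NE \<Longrightarrow> Y \<in> NE \<Longrightarrow> X \<noteq> Y \<Longrightarrow> symd X Y \<in> NE"
  by (auto simp: NE_def symd_def)

lemma VL_M: assumes X: "X \<in> NE" and Y: "Y \<in> NE" and XY: "X \<noteq> Y"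
  shows "veldkamp_line Mp Ml (\<in>) (HX X) (HX Y) = {HX X, HX Y, HX (symd X Y)}"
proof -
  have "veldkamp_line Mp Ml (\<in>) (HX X) (HX Y) = {H \<in> HX ` NE. H = HX X \<or> H = HX Y \<or>
      (HX X \<inter> HX Y = HX X \<inter> H \<and> HX X \<inter> H = HX Y \<inter> H)}"
    unfolding veldkamp_line_def hyps_M ..
  also have "\<dots> = {HX X, HX Y, HX (symd X Y)}"
    using vkey[OF X Y XY] symd_NE[OF X Y XY] X Y by blast
  finally show ?thesis .
qed


lemma inj_img_sub: assumes "inj_on h S" "P \<subseteq> S" "T \<subseteq> S" shows "h ` P \<subseteq> h ` T \<longleftrightarrow> P \<subseteq> T"
proof
  assume a: "h ` P \<subseteq> h ` T"
  show "P \<subseteq> T"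
  proof
    fix x assume "x \<in> P"
    then have "h x \<in> h ` T" using a by blast
    then show "x \<in> T" using inj_on_image_mem_iff[OF assms(1)] assms(2,3) \<open>x \<in> P\<close> by blast
  qed
qed auto

lemma bij_subsets: assumes "bij_betw h A B"
  shows "bij_betw (image h) {P. P \<subseteq> A \<and> card P = n} {P. P \<subseteq> B \<and> card P = n}"
proof -
  have inj: "inj_on h A" and im: "h ` A = B" using assms by (auto simp: bij_betw_def)
  have "inj_on (image h) {P. P \<subseteq> A \<and> card P = n}"
    using inj_on_image_Pow[OF inj] by (rule inj_on_subset) auto
  moreover have "image h ` {P. P \<subseteq> A \<and> card P = n} = {P. P \<subseteq> B \<and> card P = n}"
  proof (intro equalityI subsetI)
    fix Q assume "Q \<in> image h ` {P. P \<subseteq> A \<and> card P = n}"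
    then obtain P where P: "P \<subseteq> A" "card P = n" "Q = h ` P" by auto
    then show "Q \<in> {P. P \<subseteq> B \<and> card P = n}" using im inj card_image[OF inj_on_subset[OF inj P(1)]] by auto
  next
    fix Q assume Q: "Q \<in> {P. P \<subseteq> B \<and> card P = n}"
    define P where "P = A \<inter> h -` Q"
    have "h ` P = Q" using Q im unfolding P_def by auto
    moreover have "card P = n" using Q card_image[OF inj_on_subset[OF inj], of P] \<open>h ` P = Q\<close> by (auto simp: P_def)
    ultimately show "Q \<in> image h ` {P. P \<subseteq> A \<and> card P = n}" by (auto simp: P_def)
  qed
  ultimately show ?thesis by (simp add: bij_betw_def)
qed

lemma Union_pairsof3: assumes "card T = 3" shows "\<Union> (pairsof T) = T"
proof -
  obtain a b c where "T = {a,b,c}" "a\<noteq>b" "b\<noteq>c" "a\<noteq>c" using assms by (auto simp: card_3_iff)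
  then show ?thesis using pairsof_3 by auto
qed

lemma lines_within: assumes "S \<subseteq> {1..7}"
  shows "{m\<in>Ml. m \<subseteq> pairsof S} = pairsof ` {T. T \<subseteq> S \<and> card T = 3}"
proof (intro equalityI subsetI)
  fix m assume m: "m \<in> {m\<in>Ml. m \<subseteq> pairsof S}"
  then obtain a b c where abc: "a\<noteq>b" "b\<noteq>c" "a\<noteq>c" "{a,b,c} \<subseteq> {1..7}" "m = pairsof {a,b,c}"
    by (auto elim: Ml_elim)
  have "{a,b} \<in> pairsof S" "{b,c} \<in> pairsof S" using m abc pairsof_3[OF abc(1-3)] by auto
  then have "{a,b,c} \<subseteq> S" by (auto simp: pairsof_def)
  then show "m \<in> pairsof ` {T. T \<subseteq> S \<and> card T = 3}" using abc by auto
next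
  fix m assume "m \<in> pairsof ` {T. T \<subseteq> S \<and> card T = 3}"
  then obtain T where T: "T \<subseteq> S" "card T = 3" "m = pairsof T" by auto
  then have "T \<in> G2_lines 7" using assms by (auto simp: G2_lines_def)
  then have "m \<in> Ml" using T by (auto simp: Ml_def)
  then show "m \<in> {m\<in>Ml. m \<subseteq> pairsof S}" using T pairsof_mono by auto
qed

lemma sub_G2: assumes S: "S \<subseteq> {1..7}"
  shows "isomorphic_to_G2 (pairsof S) {m\<in>Ml. m \<subseteq> pairsof S} (\<in>) (card S)"
proof -
  have fin: "finite S" using S finite_subset by blast
  obtain h where h: "bij_betw h S {1..card S}" using bij_betw_iff_card[OF fin, of "{1..card S}"] by auto
  have inj: "inj_on h S" using h by (auto simp: bij_betw_def)
  have bp: "bij_betw (image h) (pairsof S) (G2_points (card S))"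
    unfolding pairsof_def G2_points_def by (rule bij_subsets[OF h])
  have b3: "bij_betw (image h) {T. T \<subseteq> S \<and> card T = 3} (G2_lines (card S))"
    unfolding G2_lines_def by (rule bij_subsets[OF h])
  define g where "g = (\<lambda>m::nat set set. h ` \<Union> m)"
  have gp: "g (pairsof T) = h ` T" if "card T = 3" for T using Union_pairsof3[OF that] by (simp add: g_def)
  have bg: "bij_betw g (pairsof ` {T. T \<subseteq> S \<and> card T = 3}) (G2_lines (card S))"
  proof (rule bij_betw_imageI)
    show "inj_on g (pairsof ` {T. T \<subseteq> S \<and> card T = 3})"
    proof (rule inj_onI)
      fix m1 m2 assume a: "m1 \<in> pairsof ` {T. T \<subseteq> S \<and> card T = 3}" "m2 \<in> pairsof ` {T. T \<subseteq> S \<and> card T = 3}" "g m1 = g m2"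
      then obtain T1 T2 where T: "T1 \<subseteq> S" "card T1 = 3" "m1 = pairsof T1" "T2 \<subseteq> S" "card T2 = 3" "m2 = pairsof T2" by auto
      then have "h ` T1 = h ` T2" using a(3) gp by simp
      then have "T1 = T2" using b3 T unfolding bij_betw_def inj_on_def by auto
      then show "m1 = m2" using T by simp
    qed
    show "g ` pairsof ` {T. T \<subseteq> S \<and> card T = 3} = G2_lines (card S)"
    proof -
      have "g ` pairsof ` {T. T \<subseteq> S \<and> card T = 3} = image h ` {T. T \<subseteq> S \<and> card T = 3}"
        using gp by (auto simp: image_image intro!: image_cong)
      then show ?thesis using b3 by (simp add: bij_betw_def)
    qed
  qed
  have inc: "P \<in> m \<longleftrightarrow> h ` P \<subseteq> g m" if Pm: "P \<in> pairsof S" "m \<in> pairsof ` {T. T \<subseteq> S \<and> card T = 3}" for P m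
  proof -
    obtain T where T: "T \<subseteq> S" "card T = 3" "m = pairsof T" using Pm(2) by auto
    have "P \<in> m \<longleftrightarrow> P \<subseteq> T" using Pm(1) T by (auto simp: pairsof_def)
    also have "\<dots> \<longleftrightarrow> h ` P \<subseteq> h ` T" using inj_img_sub[OF inj, of P T] Pm(1) T by (auto simp: pairsof_def)
    finally show ?thesis using gp T by simp
  qed
  show ?thesis unfolding isomorphic_to_G2_def isomorphic_inc_def lines_within[OF S]
    using bp bg inc by blast
qed

lemma NE_card: assumes "X \<in> NE" shows "1 \<le> card X" "card X \<le> 6" "card ({1..7} - X) = 7 - card X"
  "{1..7} \<inter> X = X" "X \<subseteq> {1..7}"
proof -
  have s: "X \<subseteq> {2..7}" "X \<noteq> {}" using assms by (auto simp: NE_def)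
  have f: "finite X" using s finite_subset by blast
  show "1 \<le> card X" using s f by (simp add: Suc_le_eq card_gt_0_iff)
  show "card X \<le> 6" using card_mono[OF _ s(1)] by simp
  show "X \<subseteq> {1..7}" using s by auto
  then show "card ({1..7} - X) = 7 - card X" by (simp add: card_Diff_subset f)
  show "{1..7} \<inter> X = X" using s by auto
qed

lemma card_HX_NE: assumes "X \<in> NE"
  shows "card (HX X) = (card X choose 2) + ((7 - card X) choose 2)"
  using card_HX[of X] NE_card[OF assms] by simp

lemma ch_cases: assumes "1 \<le> k" "k \<le> (6::nat)"
  shows "(k choose 2) + ((7 - k) choose 2) = 9 \<longleftrightarrow> k = 3 \<or> k = 4"
        "(k choose 2) + ((7 - k) choose 2) = 11 \<longleftrightarrow> k = 2 \<or> k = 5"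
        "(k choose 2) + ((7 - k) choose 2) = 15 \<longleftrightarrow> k = 1 \<or> k = 6"
proof -
  have "k = 1 \<or> k = 2 \<or> k = 3 \<or> k = 4 \<or> k = 5 \<or> k = 6" using assms by linarith
  then show "(k choose 2) + ((7 - k) choose 2) = 9 \<longleftrightarrow> k = 3 \<or> k = 4"
        "(k choose 2) + ((7 - k) choose 2) = 11 \<longleftrightarrow> k = 2 \<or> k = 5"
        "(k choose 2) + ((7 - k) choose 2) = 15 \<longleftrightarrow> k = 1 \<or> k = 6"
    by (auto simp: choose_two)
qed

lemma pairsof_disj: "pairsof A \<inter> pairsof ({1..7} - A) = {}"
proof -
  have "P = {}" if "P \<in> pairsof A" "P \<in> pairsof ({1..7} - A)" for P
  proof -
    have "P \<subseteq> A" "P \<subseteq> - A" using that unfolding pairsof_def by auto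
    then show ?thesis by auto
  qed
  moreover have "{} \<notin> pairsof S" for S by (simp add: pairsof_def)
  ultimately show ?thesis by blast
qed

lemma notcol_pairs: assumes "A \<subseteq> {1..7}" "card A = 3"
  shows "{q\<in>Mp. \<forall>p\<in>pairsof A. \<not> collinear Ml (\<in>) p q} = pairsof ({1..7} - A)"
proof -
  have pA: "pairsof A \<subseteq> Mp" using assms(1) by (rule pairsof_mono)
  have U: "\<Union> (pairsof A) = A" using assms(2) by (rule Union_pairsof3)
  have "(\<forall>p\<in>pairsof A. \<not> collinear Ml (\<in>) p q) \<longleftrightarrow> q \<inter> A = {}" if q: "q \<in> Mp" for q
  proof -
    have "(\<forall>p\<in>pairsof A. \<not> collinear Ml (\<in>) p q) \<longleftrightarrow> (\<forall>p\<in>pairsof A. p \<inter> q = {})"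
      using collinear_M[OF _ q] pA by (meson subsetD)
    also have "\<dots> \<longleftrightarrow> q \<inter> \<Union> (pairsof A) = {}" by auto
    finally show ?thesis using U by simp
  qed
  then have "{q\<in>Mp. \<forall>p\<in>pairsof A. \<not> collinear Ml (\<in>) p q} = {q\<in>Mp. q \<inter> A = {}}" by blast
  also have "\<dots> = pairsof ({1..7} - A)" unfolding pairsof_def by blast
  finally show ?thesis .
qed

lemma notcol_point: assumes "p \<in> Mp"
  shows "{q\<in>Mp. q \<noteq> p \<and> \<not> collinear Ml (\<in>) p q} = pairsof ({1..7} - p)"
proof -
  have "p \<noteq> {}" using assms by (auto simp: pairsof_def)
  then have "(q \<noteq> p \<and> \<not> collinear Ml (\<in>) p q) \<longleftrightarrow> q \<inter> p = {}" if "q \<in> Mp" for q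
    using collinear_M[OF assms that] by auto
  then have "{q\<in>Mp. q \<noteq> p \<and> \<not> collinear Ml (\<in>) p q} = {q\<in>Mp. q \<inter> p = {}}" by blast
  also have "\<dots> = pairsof ({1..7} - p)" unfolding pairsof_def by blast
  finally show ?thesis .
qed

lemma HX_sym: "X \<subseteq> {1..7} \<Longrightarrow> HX X = pairsof ({1..7} - X) \<union> pairsof ({1..7} - ({1..7} - X))"
  using HX_split[of X] by (simp add: Int_absorb1 double_diff Un_commute)

lemma HX_side: assumes "X \<in> NE" "card X = k \<or> card X = 7 - k" "k \<le> 7"
  obtains A where "A \<subseteq> {1..7}" "card A = k" "HX X = pairsof A \<union> pairsof ({1..7} - A)"
proof (cases "card X = k")
  case True then show ?thesis using that HX_split[of X] NE_card[OF assms(1)] by auto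
next
  case False
  then have "card ({1..7} - X) = k" using assms NE_card[OF assms(1)] by auto
  then show ?thesis using that[of "{1..7} - X"] HX_sym NE_card[OF assms(1)] by auto
qed

lemma S9M: assumes "H \<in> hyperplanes Mp Ml (\<in>)" "card H = 9"
  shows "\<exists>l\<in>Ml. let Q = {q\<in>Mp. \<forall>p\<in>l. \<not> collinear Ml (\<in>) p q} in
          H = l \<union> Q \<and> l \<inter> Q = {} \<and> isomorphic_to_G2 Q {m\<in>Ml. m \<subseteq> Q} (\<in>) 4"
proof -
  obtain X where X: "X \<in> NE" "H = HX X" using assms(1) hyps_M by auto
  have "card X = 3 \<or> card X = 4" using ch_cases(1) NE_card[OF X(1)] card_HX_NE[OF X(1)] assms(2) X(2) by auto
  then have c: "card X = 3 \<or> card X = 7 - 3" by auto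
  have le: "(3::nat) \<le> 7" by simp
  obtain A where A: "A \<subseteq> {1..7}" "card A = 3" "HX X = pairsof A \<union> pairsof ({1..7} - A)"
    using HX_side[OF X(1) c le] by blast
  obtain a b c where abc: "A = {a,b,c}" "a\<noteq>b" "b\<noteq>c" "a\<noteq>c" using A(2) by (auto simp: card_3_iff)
  have l: "pairsof A \<in> Ml" using Ml_intro[OF abc(2-4)] A(1) abc(1) by simp
  have c4: "card ({1..7} - A) = 4" using A by (simp add: card_Diff_subset finite_subset)
  show ?thesis
    apply (rule bexI[OF _ l])
    unfolding Let_def notcol_pairs[OF A(1,2)]
    using A(3) X(2) pairsof_disj[of A] sub_G2[of "{1..7} - A"] c4 by auto
qed

lemma S11M: assumes "H \<in> hyperplanes Mp Ml (\<in>)" "card H = 11"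
  shows "\<exists>p\<in>Mp. let Q = {q\<in>Mp. q \<noteq> p \<and> \<not> collinear Ml (\<in>) p q} in
          H = insert p Q \<and> isomorphic_to_G2 Q {m\<in>Ml. m \<subseteq> Q} (\<in>) 5"
proof -
  obtain X where X: "X \<in> NE" "H = HX X" using assms(1) hyps_M by auto
  have "card X = 2 \<or> card X = 5" using ch_cases(2) NE_card[OF X(1)] card_HX_NE[OF X(1)] assms(2) X(2) by auto
  then have c: "card X = 2 \<or> card X = 7 - 2" by auto
  have le: "(2::nat) \<le> 7" by simp
  obtain A where A: "A \<subseteq> {1..7}" "card A = 2" "HX X = pairsof A \<union> pairsof ({1..7} - A)"
    using HX_side[OF X(1) c le] by blast
  have pA: "A \<in> Mp" using A by (auto simp: pairsof_def)
  have fA: "finite A" using A(2) card_ge_0_finite by force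
  have "pairsof A = {A}" unfolding pairsof_def using card_subset_eq[OF fA] A(2) by auto
  moreover have c5: "card ({1..7} - A) = 5" using A by (simp add: card_Diff_subset finite_subset)
  ultimately show ?thesis
    apply -
    apply (rule bexI[OF _ pA])
    unfolding Let_def notcol_point[OF pA]
    using A(3) X(2) sub_G2[of "{1..7} - A"] by auto
qed

lemma S15M: assumes "H \<in> hyperplanes Mp Ml (\<in>)" "card H = 15"
  shows "isomorphic_to_G2 H {m\<in>Ml. m \<subseteq> H} (\<in>) 6"
proof -
  obtain X where X: "X \<in> NE" "H = HX X" using assms(1) hyps_M by auto
  have "card X = 1 \<or> card X = 6" using ch_cases(3) NE_card[OF X(1)] card_HX_NE[OF X(1)] assms(2) X(2) by auto
  then have c: "card X = 1 \<or> card X = 7 - 1" by auto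
  have le: "(1::nat) \<le> 7" by simp
  obtain A where A: "A \<subseteq> {1..7}" "card A = 1" "HX X = pairsof A \<union> pairsof ({1..7} - A)"
    using HX_side[OF X(1) c le] by blast
  have fA: "finite A" using A(2) card_ge_0_finite by force
  have False if "P \<subseteq> A" "card P = 2" for P
    using card_mono[OF fA that(1)] A(2) that(2) by simp
  then have "pairsof A = {}" unfolding pairsof_def by blast
  moreover have c6: "card ({1..7} - A) = 6" using A by (simp add: card_Diff_subset finite_subset)
  ultimately show ?thesis using A(3) X(2) sub_G2[of "{1..7} - A"] by auto
qed


definition siso :: "'a set \<Rightarrow> 'a set set \<Rightarrow> 'b set \<Rightarrow> 'b set set \<Rightarrow> ('a \<Rightarrow> 'b) \<Rightarrow> bool" where
  "siso P L P' L' f \<longleftrightarrow> bij_betw f P P' \<and> (\<forall>l\<in>L. l \<subseteq> P) \<and> L' = image f ` L"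

lemma iso_sym: assumes "isomorphic_inc P L I P' L' I'" shows "isomorphic_inc P' L' I' P L I"
proof -
  obtain f g where fg: "bij_betw f P P'" "bij_betw g L L'" "\<forall>p\<in>P. \<forall>l\<in>L. I p l \<longleftrightarrow> I' (f p) (g l)"
    using assms by (auto simp: isomorphic_inc_def)
  have b1: "bij_betw (inv_into P f) P' P" "bij_betw (inv_into L g) L' L"
    using fg by (auto intro: bij_betw_inv_into)
  have "I' p l \<longleftrightarrow> I (inv_into P f p) (inv_into L g l)" if "p \<in> P'" "l \<in> L'" for p l
  proof -
    have "inv_into P f p \<in> P" "inv_into L g l \<in> L" using b1 that by (auto simp: bij_betw_def)
    moreover have "f (inv_into P f p) = p" "g (inv_into L g l) = l"
      using fg that by (auto simp: bij_betw_def f_inv_into_f)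
    ultimately show ?thesis using fg(3) by metis
  qed
  then show ?thesis using b1 by (auto simp: isomorphic_inc_def)
qed

lemma iso_trans: assumes "isomorphic_inc P L I P' L' I'" "isomorphic_inc P' L' I' P'' L'' I''"
  shows "isomorphic_inc P L I P'' L'' I''"
proof -
  obtain f g where fg: "bij_betw f P P'" "bij_betw g L L'" "\<forall>p\<in>P. \<forall>l\<in>L. I p l \<longleftrightarrow> I' (f p) (g l)"
    using assms(1) by (auto simp: isomorphic_inc_def)
  obtain f2 g2 where fg2: "bij_betw f2 P' P''" "bij_betw g2 L' L''" "\<forall>p\<in>P'. \<forall>l\<in>L'. I' p l \<longleftrightarrow> I'' (f2 p) (g2 l)"
    using assms(2) by (auto simp: isomorphic_inc_def)
  have "\<forall>p\<in>P. \<forall>l\<in>L. I p l \<longleftrightarrow> I'' ((f2 \<circ> f) p) ((g2 \<circ> g) l)"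
    using fg fg2 by (auto simp: bij_betw_def)
  then show ?thesis unfolding isomorphic_inc_def
    using bij_betw_trans[OF fg(1) fg2(1)] bij_betw_trans[OF fg(2) fg2(2)] by blast
qed

lemma card_filter_bij: assumes "bij_betw f A B" "\<And>x. x \<in> A \<Longrightarrow> \<Phi> x \<longleftrightarrow> \<Psi> (f x)"
  shows "card {x\<in>A. \<Phi> x} = card {y\<in>B. \<Psi> y}"
proof -
  have e: "f ` {x\<in>A. \<Phi> x} = {y\<in>B. \<Psi> y}" using assms by (auto simp: bij_betw_def)
  have i: "inj_on f {x\<in>A. \<Phi> x}" using assms(1) by (auto simp: bij_betw_def intro: inj_on_subset)
  show ?thesis using card_image[OF i] e by simp
qed

lemma config_transfer: assumes "isomorphic_inc P L I P' L' I'" "configuration P' L' I' v r b k"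
  shows "configuration P L I v r b k"
proof -
  obtain f g where fg: "bij_betw f P P'" "bij_betw g L L'" "\<forall>p\<in>P. \<forall>l\<in>L. I p l \<longleftrightarrow> I' (f p) (g l)"
    using assms(1) by (auto simp: isomorphic_inc_def)
  have c: "finite P'" "finite L'" "card P' = v" "card L' = b"
     "\<forall>l\<in>L'. card {p\<in>P'. I' p l} = k" "\<forall>p\<in>P'. card {l\<in>L'. I' p l} = r"
     "\<forall>p\<in>P'. \<forall>q\<in>P'. p \<noteq> q \<longrightarrow> card {l\<in>L'. I' p l \<and> I' q l} \<le> 1"
    using assms(2) by (auto simp: configuration_def)
  have "finite P" "finite L" using fg c bij_betw_finite by blast+
  moreover have "card P = v" "card L = b" using fg c bij_betw_same_card by metis+
  moreover have "card {p\<in>P. I p l} = k" if "l \<in> L" for l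
  proof -
    have "card {p\<in>P. I p l} = card {p\<in>P'. I' p (g l)}"
      by (rule card_filter_bij[OF fg(1)]) (use fg(3) that in blast)
    then show ?thesis using c(5) fg(2) that by (auto simp: bij_betw_def)
  qed
  moreover have "card {l\<in>L. I p l} = r" if "p \<in> P" for p
  proof -
    have "card {l\<in>L. I p l} = card {l\<in>L'. I' (f p) l}"
      by (rule card_filter_bij[OF fg(2)]) (use fg(3) that in blast)
    then show ?thesis using c(6) fg(1) that by (auto simp: bij_betw_def)
  qed
  moreover have "card {l\<in>L. I p l \<and> I q l} \<le> 1" if "p \<in> P" "q \<in> P" "p \<noteq> q" for p q
  proof -
    have "card {l\<in>L. I p l \<and> I q l} = card {l\<in>L'. I' (f p) l \<and> I' (f q) l}"
      by (rule card_filter_bij[OF fg(2)]) (use fg(3) that in blast)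
    moreover have "f p \<noteq> f q" "f p \<in> P'" "f q \<in> P'" using fg(1) that by (auto simp: bij_betw_def inj_on_def)
    ultimately show ?thesis using c(7) by auto
  qed
  ultimately show ?thesis by (auto simp: configuration_def)
qed

context
  fixes P :: "'a set" and L :: "'a set set" and P' :: "'b set" and L' :: "'b set set" and f :: "'a \<Rightarrow> 'b"
  assumes S: "siso P L P' L' f"
begin

lemma S_bij: "bij_betw f P P'" using S by (simp add: siso_def)
lemma S_inj: "inj_on f P" using S_bij by (simp add: bij_betw_def)
lemma S_img: "f ` P = P'" using S_bij by (simp add: bij_betw_def)
lemma S_lsub: "l \<in> L \<Longrightarrow> l \<subseteq> P" using S by (simp add: siso_def)
lemma S_L': "L' = image f ` L" using S by (simp add: siso_def)

lemma S_imeq: "A \<subseteq> P \<Longrightarrow> B \<subseteq> P \<Longrightarrow> f ` A = f ` B \<longleftrightarrow> A = B"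
  using inj_on_image_eq_iff[OF S_inj] by blast
lemma S_imsub: "A \<subseteq> P \<Longrightarrow> B \<subseteq> P \<Longrightarrow> f ` A \<subseteq> f ` B \<longleftrightarrow> A \<subseteq> B"
proof
  assume a: "A \<subseteq> P" "B \<subseteq> P" "f ` A \<subseteq> f ` B"
  show "A \<subseteq> B"
  proof
    fix x assume "x \<in> A"
    then have "f x \<in> f ` B" using a by blast
    then show "x \<in> B" using inj_on_image_mem_iff[OF S_inj] a \<open>x \<in> A\<close> by blast
  qed
qed auto
lemma S_imint: "A \<subseteq> P \<Longrightarrow> B \<subseteq> P \<Longrightarrow> f ` A \<inter> f ` B = f ` (A \<inter> B)"
  using inj_on_image_Int[OF S_inj] by blast
lemma S_card: "A \<subseteq> P \<Longrightarrow> card (f ` A) = card A"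
  using card_image inj_on_subset[OF S_inj] by blast

lemma S_hyp: assumes "H \<subseteq> P"
  shows "geometric_hyperplane P' L' (\<in>) (f ` H) \<longleftrightarrow> geometric_hyperplane P L (\<in>) H"
proof -
  have "f ` H = f ` P \<longleftrightarrow> H = P" using S_imeq[OF assms subset_refl] .
  moreover have "f ` H \<subseteq> P'" using assms S_img by blast
  ultimately have "f ` H \<subset> P' \<longleftrightarrow> H \<subset> P" using assms S_img by (simp add: psubset_eq)
  moreover have "({p\<in>P'. p \<in> f ` l} \<subseteq> f ` H \<or> card {p\<in>P'. p \<in> f ` l \<and> p \<in> f ` H} = 1) \<longleftrightarrow>
     ({p\<in>P. p \<in> l} \<subseteq> H \<or> card {p\<in>P. p \<in> l \<and> p \<in> H} = 1)" if l: "l \<in> L" for l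
  proof -
    have lP: "l \<subseteq> P" using S_lsub l by blast
    have e1: "{p\<in>P'. p \<in> f ` l} = f ` l" "{p\<in>P. p \<in> l} = l" using lP S_img by auto
    have e2: "{p\<in>P'. p \<in> f ` l \<and> p \<in> f ` H} = f ` (l \<inter> H)" "{p\<in>P. p \<in> l \<and> p \<in> H} = l \<inter> H"
      using lP S_img S_imint[OF lP assms] by auto
    have c: "card (f ` (l \<inter> H)) = card (l \<inter> H)" using S_card lP by blast
    show ?thesis unfolding e1 e2 c S_imsub[OF lP assms] ..
  qed
  ultimately show ?thesis unfolding geometric_hyperplane_def S_L' by auto
qed

lemma S_hyp_sub: "H \<in> hyperplanes P L (\<in>) \<Longrightarrow> H \<subseteq> P"
  by (auto simp: hyperplanes_def geometric_hyperplane_def)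

lemma S_hyps: "hyperplanes P' L' (\<in>) = image f ` hyperplanes P L (\<in>)"
proof (intro equalityI subsetI)
  fix H' assume H': "H' \<in> hyperplanes P' L' (\<in>)"
  then have sub: "H' \<subseteq> P'" by (auto simp: hyperplanes_def geometric_hyperplane_def)
  define H where "H = P \<inter> f -` H'"
  have "f ` H = H'" using sub S_img unfolding H_def by auto
  moreover have "H \<subseteq> P" by (auto simp: H_def)
  ultimately show "H' \<in> image f ` hyperplanes P L (\<in>)"
    using H' S_hyp[of H] by (auto simp: hyperplanes_def)
next
  fix H' assume "H' \<in> image f ` hyperplanes P L (\<in>)"
  then obtain H where "H \<in> hyperplanes P L (\<in>)" "H' = f ` H" by auto
  then show "H' \<in> hyperplanes P' L' (\<in>)" using S_hyp[of H] S_hyp_sub by (auto simp: hyperplanes_def)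
qed

lemma S_vline: assumes "H1 \<subseteq> P" "H2 \<subseteq> P"
  shows "veldkamp_line P' L' (\<in>) (f ` H1) (f ` H2) = image f ` veldkamp_line P L (\<in>) H1 H2"
proof -
  have "veldkamp_line P' L' (\<in>) (f ` H1) (f ` H2) =
     {H' \<in> image f ` hyperplanes P L (\<in>). H' = f ` H1 \<or> H' = f ` H2 \<or>
        (f ` H1 \<inter> f ` H2 = f ` H1 \<inter> H' \<and> f ` H1 \<inter> H' = f ` H2 \<inter> H')}"
    unfolding veldkamp_line_def S_hyps ..
  also have "\<dots> = image f ` {H \<in> hyperplanes P L (\<in>). H = H1 \<or> H = H2 \<or>
        (H1 \<inter> H2 = H1 \<inter> H \<and> H1 \<inter> H = H2 \<inter> H)}"
  proof (intro equalityI subsetI)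
    fix H' assume "H' \<in> {H' \<in> image f ` hyperplanes P L (\<in>). H' = f ` H1 \<or> H' = f ` H2 \<or>
        (f ` H1 \<inter> f ` H2 = f ` H1 \<inter> H' \<and> f ` H1 \<inter> H' = f ` H2 \<inter> H')}"
    then obtain H where H: "H \<in> hyperplanes P L (\<in>)" "H' = f ` H"
      "f ` H = f ` H1 \<or> f ` H = f ` H2 \<or> (f ` H1 \<inter> f ` H2 = f ` H1 \<inter> f ` H \<and> f ` H1 \<inter> f ` H = f ` H2 \<inter> f ` H)"
      by auto
    have HP: "H \<subseteq> P" using H(1) S_hyp_sub by blast
    have q: "f ` H = f ` H1 \<longleftrightarrow> H = H1" "f ` H = f ` H2 \<longleftrightarrow> H = H2"
      "f ` (H1 \<inter> H2) = f ` (H1 \<inter> H) \<longleftrightarrow> H1 \<inter> H2 = H1 \<inter> H"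
      "f ` (H1 \<inter> H) = f ` (H2 \<inter> H) \<longleftrightarrow> H1 \<inter> H = H2 \<inter> H"
      using S_imeq HP assms by (meson inf.coboundedI1)+
    have "H = H1 \<or> H = H2 \<or> (H1 \<inter> H2 = H1 \<inter> H \<and> H1 \<inter> H = H2 \<inter> H)"
      using H(3) unfolding S_imint[OF assms] S_imint[OF assms(1) HP] S_imint[OF assms(2) HP] q .
    then show "H' \<in> image f ` {H \<in> hyperplanes P L (\<in>). H = H1 \<or> H = H2 \<or>
        (H1 \<inter> H2 = H1 \<inter> H \<and> H1 \<inter> H = H2 \<inter> H)}" using H by blast
  next
    fix H' assume "H' \<in> image f ` {H \<in> hyperplanes P L (\<in>). H = H1 \<or> H = H2 \<or>
        (H1 \<inter> H2 = H1 \<inter> H \<and> H1 \<inter> H = H2 \<inter> H)}"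
    then obtain H where H: "H \<in> hyperplanes P L (\<in>)" "H' = f ` H"
      "H = H1 \<or> H = H2 \<or> (H1 \<inter> H2 = H1 \<inter> H \<and> H1 \<inter> H = H2 \<inter> H)" by auto
    have HP: "H \<subseteq> P" using H(1) S_hyp_sub by blast
    have "f ` H = f ` H1 \<or> f ` H = f ` H2 \<or> (f ` H1 \<inter> f ` H2 = f ` H1 \<inter> f ` H \<and> f ` H1 \<inter> f ` H = f ` H2 \<inter> f ` H)"
      unfolding S_imint[OF assms] S_imint[OF assms(1) HP] S_imint[OF assms(2) HP]
      using H(3) by (elim disjE) simp_all
    then show "H' \<in> {H' \<in> image f ` hyperplanes P L (\<in>). H' = f ` H1 \<or> H' = f ` H2 \<or>
        (f ` H1 \<inter> f ` H2 = f ` H1 \<inter> H' \<and> f ` H1 \<inter> H' = f ` H2 \<inter> H')}"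
      unfolding H(2) using imageI[OF H(1), of "image f"] by simp
  qed
  finally show ?thesis unfolding veldkamp_line_def .
qed

lemma S_col: assumes "p \<in> P" "q \<in> P" shows "collinear L' (\<in>) (f p) (f q) \<longleftrightarrow> collinear L (\<in>) p q"
proof -
  have "f p \<in> f ` l \<longleftrightarrow> p \<in> l" "f q \<in> f ` l \<longleftrightarrow> q \<in> l" if "l \<in> L" for l
    using inj_on_image_mem_iff[OF S_inj] assms S_lsub[OF that] by auto
  then show ?thesis unfolding collinear_def S_L' by auto
qed

lemma S_iso: "isomorphic_inc P L (\<in>) P' L' (\<in>)"
proof -
  have "inj_on (image f) L" using inj_on_image_Pow[OF S_inj] S_lsub by (auto intro: inj_on_subset)
  then have "bij_betw (image f) L L'" using S_L' by (simp add: bij_betw_def)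
  moreover have "\<forall>p\<in>P. \<forall>l\<in>L. p \<in> l \<longleftrightarrow> f p \<in> f ` l"
    using inj_on_image_mem_iff[OF S_inj] S_lsub by blast
  ultimately show ?thesis using S_bij unfolding isomorphic_inc_def by blast
qed

lemma S_sub: assumes "Q \<subseteq> P" shows "siso Q {m\<in>L. m \<subseteq> Q} (f ` Q) {m\<in>L'. m \<subseteq> f ` Q} f"
proof -
  have "bij_betw f Q (f ` Q)" using inj_on_subset[OF S_inj assms] by (simp add: bij_betw_def)
  moreover have "{m\<in>L'. m \<subseteq> f ` Q} = image f ` {m\<in>L. m \<subseteq> Q}"
    using S_imsub S_lsub assms unfolding S_L' by auto
  ultimately show ?thesis unfolding siso_def by auto
qed

end

lemma siso_G2: assumes "siso P L P' L' f" "Q \<subseteq> P" "isomorphic_to_G2 Q {m\<in>L. m \<subseteq> Q} (\<in>) k"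
  shows "isomorphic_to_G2 (f ` Q) {m\<in>L'. m \<subseteq> f ` Q} (\<in>) k"
proof -
  have "siso Q {m\<in>L. m \<subseteq> Q} (f ` Q) {m\<in>L'. m \<subseteq> f ` Q} f" using S_sub[OF assms(1,2)] .
  then have "isomorphic_inc Q {m\<in>L. m \<subseteq> Q} (\<in>) (f ` Q) {m\<in>L'. m \<subseteq> f ` Q} (\<in>)" by (rule S_iso)
  then have "isomorphic_inc (f ` Q) {m\<in>L'. m \<subseteq> f ` Q} (\<in>) Q {m\<in>L. m \<subseteq> Q} (\<in>)" by (rule iso_sym)
  then show ?thesis using assms(3) unfolding isomorphic_to_G2_def by (rule iso_trans)
qed


lemma set27: "{2..7::nat} = {2,3,4,5,6,7}"
  by (simp add: atLeastAtMost_upt eval_nat_numeral upt_conv_Cons)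
lemma set17: "{1..7::nat} = {1,2,3,4,5,6,7}"
  by (simp add: atLeastAtMost_upt eval_nat_numeral upt_conv_Cons)

lemma Xm_alt: "Xm m = {i\<in>{2..7}. bit m (i-2)}"
  unfolding Xm_def set27 by auto

lemma Xm_xor: "Xm (xor a b) = symd (Xm a) (Xm b)"
  by (auto simp: Xm_alt symd_def bit_xor_iff)

lemma Xm_sub: "Xm m \<subseteq> {2..7}" by (auto simp: Xm_alt)

lemma Xm_bit: "n < 6 \<Longrightarrow> (n+2) \<in> Xm a \<longleftrightarrow> bit a n"
  by (auto simp: Xm_alt)

lemma Xm_inj: "inj_on Xm {0..63}"
proof (rule inj_onI)
  fix a b assume ab: "a \<in> {0..63::nat}" "b \<in> {0..63::nat}" "Xm a = Xm b"
  have lt: "a < 2^6" "b < 2^6" using ab by auto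
  show "a = b"
  proof (rule bit_eqI)
    fix n
    show "bit a n \<longleftrightarrow> bit b n"
    proof (cases "n < 6")
      case True then show ?thesis using Xm_bit[of n a] Xm_bit[of n b] ab(3) by simp
    next
      case False then show ?thesis using nat_bit_lt[OF lt(1)] nat_bit_lt[OF lt(2)] by auto
    qed
  qed
qed

lemma Xm_img: "Xm ` {0..63} = Pow {2..7}"
proof -
  have s: "Xm ` {0..63} \<subseteq> Pow {2..7}" using Xm_sub by auto
  have "card (Xm ` {0..63}) = 64" using card_image[OF Xm_inj] by simp
  moreover have "card (Pow {2..7::nat}) = 64" by (simp add: card_Pow)
  ultimately show ?thesis using card_subset_eq[OF _ s] by simp
qed

lemma Xm0: "Xm 0 = {}" by (simp add: Xm_def)

lemma Xm_NE: "Xm ` {1..63} = NE"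
proof -
  have e: "{1..63::nat} = {0..63} - {0}" by auto
  have "Xm ` {1..63} = Xm ` {0..63} - Xm ` {0}"
    unfolding e by (rule inj_on_image_set_diff[OF Xm_inj]) auto
  then show ?thesis unfolding Xm_img NE_def by (auto simp: Xm0)
qed

lemma Xm_in_NE: "m \<in> {1..63} \<Longrightarrow> Xm m \<in> NE" using Xm_NE by blast

lemma Xm_inj1: "inj_on Xm {1..63}" using Xm_inj by (rule inj_on_subset) auto

lemma kind_cards: "kind 21 = {m \<in> {1..63}. card (Xm m) = 3 \<or> card (Xm m) = 4}"
                  "kind 15 = {m \<in> {1..63}. card (Xm m) = 2 \<or> card (Xm m) = 5}"
                  "kind 0 = {m \<in> {1..63}. card (Xm m) = 1 \<or> card (Xm m) = 6}"
proof -
  have b: "1 \<le> card (Xm m)" "card (Xm m) \<le> 6" if "m \<in> {1..63}" for m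
    using NE_card[OF Xm_in_NE[OF that]] by auto
  have "card (Xm m) = 1 \<or> card (Xm m) = 2 \<or> card (Xm m) = 3 \<or> card (Xm m) = 4 \<or> card (Xm m) = 5 \<or> card (Xm m) = 6"
    if "m \<in> {1..63}" for m using b[OF that] by linarith
  then show "kind 21 = {m \<in> {1..63}. card (Xm m) = 3 \<or> card (Xm m) = 4}"
                  "kind 15 = {m \<in> {1..63}. card (Xm m) = 2 \<or> card (Xm m) = 5}"
                  "kind 0 = {m \<in> {1..63}. card (Xm m) = 1 \<or> card (Xm m) = 6}"
    unfolding kind_eq kdv_def by auto
qed

definition w :: "nat \<Rightarrow> nat" where "w i = (if i = 1 then 63 else 2^(i-2))"
definition pt :: "nat set \<Rightarrow> nat" where "pt P = xor (w (Min P)) (w (Max P))"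

lemma pt_pair: assumes "i \<noteq> j" shows "pt {i,j} = xor (w i) (w j)"
proof (cases "i < j")
  case True then show ?thesis by (simp add: pt_def)
next
  case False then show ?thesis using assms by (simp add: pt_def xor.commute)
qed

definition L7 :: "nat list" where "L7 = [1,2,3,4,5,6,7]"
lemma set_L7: "set L7 = {1..7}" unfolding L7_def set17 by simp

definition pairs7 :: "(nat \<times> nat) list" where
  "pairs7 = [(i,j). i \<leftarrow> L7, j \<leftarrow> L7, i < j]"

lemma set_pairs7: "set pairs7 = {(i,j). i \<in> {1..7} \<and> j \<in> {1..7} \<and> i < j}"
  unfolding pairs7_def set_L7[symmetric] by auto

lemma Mp_pairs: "Mp = (\<lambda>(i,j). {i,j}) ` set pairs7"
proof (intro equalityI subsetI)
  fix P assume "P \<in> Mp"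
  then obtain i j where ij: "P = {i,j}" "i \<noteq> j" "i \<in> {1..7}" "j \<in> {1..7}" unfolding Mp_mem by blast
  show "P \<in> (\<lambda>(i,j). {i,j}) ` set pairs7"
  proof (cases "i < j")
    case True then show ?thesis using ij unfolding set_pairs7 by (auto intro!: image_eqI[of _ _ "(i,j)"])
  next
    case False then show ?thesis using ij unfolding set_pairs7
      by (auto simp: insert_commute intro!: image_eqI[of _ _ "(j,i)"])
  qed
next
  fix P assume "P \<in> (\<lambda>(i,j). {i,j}) ` set pairs7"
  then obtain i j where ij: "(i,j) \<in> set pairs7" "P = {i,j}" by auto
  then have "i\<noteq>j" "i\<in>{1..7}" "j\<in>{1..7}" unfolding set_pairs7 by auto
  then show "P \<in> Mp" using pair_in_Mp ij(2) by blast
qed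

lemma ptMp: "pt ` Mp = set K15"
proof -
  have "pt ` Mp = (\<lambda>(i,j). xor (w i) (w j)) ` set pairs7"
    unfolding Mp_pairs image_image
  proof (rule image_cong[OF refl])
    fix x assume "x \<in> set pairs7"
    then show "pt (case x of (i, j) \<Rightarrow> {i, j}) = (case x of (i, j) \<Rightarrow> xor (w i) (w j))"
      unfolding set_pairs7 using pt_pair by auto
  qed
  also have "\<dots> = set (map (\<lambda>(i,j). xor (w i) (w j)) pairs7)" by simp
  also have "\<dots> = set K15"
    by (simp add: pairs7_def L7_def K15_def w_def) (simp add: insert_commute)
  finally show ?thesis .
qed


lemma card_Mp: "card Mp = 21"
  by (simp add: card_pairsof choose_two)

lemma pt_inj: "inj_on pt Mp"
proof (rule eq_card_imp_inj_on)
  show "finite Mp" by (rule rev_finite_subset[of "Pow {1..7}"]) (auto simp: pairsof_def)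
  show "card (pt ` Mp) = card Mp" unfolding ptMp card_Mp by (simp add: K15_def)
qed

lemma ptxor: "xor (xor A B) (xor B C) = xor (A::nat) C"
  by (simp only: xor.assoc x1)

lemma ord3_perm: "ord3 x y z = ord3 y x z" "ord3 x y z = ord3 x z y"
  by (auto simp: ord3_def)

lemma CK1: "\<forall>a\<in>set L7. \<forall>b\<in>set L7. \<forall>c\<in>set L7. a \<noteq> b \<and> b \<noteq> c \<and> a \<noteq> c \<longrightarrow>
   \<not> ord3 (xor (w a) (w b)) (xor (w b) (w c)) (xor (w a) (w c))"
  by (simp add: L7_def w_def ord3_def)

lemma CK2: "\<forall>(i,j)\<in>set pairs7. \<forall>(k,l)\<in>set pairs7. i \<noteq> k \<and> i \<noteq> l \<and> j \<noteq> k \<and> j \<noteq> l \<longrightarrow>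
   xor (xor (w i) (w j)) (xor (w k) (w l)) \<notin> set K15"
  by (simp add: pairs7_def L7_def w_def K15_def)

lemma cond6I: "1\<le>a \<Longrightarrow> a<b \<Longrightarrow> b<c \<Longrightarrow> c\<le>63 \<Longrightarrow> c = xor a b \<Longrightarrow> \<not> ord3 a b c \<Longrightarrow> cond6 a b c"
  by (auto simp: cond6_def ord3_def)

lemma defI: "T = {a,b,c} \<Longrightarrow> cond6 a b c \<Longrightarrow> defective_triple 6 T"
  using def_char by blast

lemma def_sym: assumes d: "x\<noteq>y" "y\<noteq>z" "x\<noteq>z" and r: "1\<le>x" "1\<le>y" "1\<le>z" "x\<le>63" "y\<le>63" "z\<le>63"
  and zx: "z = xor x y" and o: "\<not> ord3 x y z"
  shows "defective_triple 6 {x,y,z}"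
proof -
  have x: "x = xor y z" unfolding zx xor.left_commute[of y x y] by simp
  have y: "y = xor x z" unfolding zx by (simp add: x1)
  have o2: "\<not> ord3 y x z" "\<not> ord3 x z y" "\<not> ord3 y z x" "\<not> ord3 z x y" "\<not> ord3 z y x"
    using o ord3_perm by metis+
  consider "x<y" "y<z" | "x<z" "z<y" | "y<x" "x<z" | "y<z" "z<x" | "z<x" "x<y" | "z<y" "y<x"
    using d by linarith
  then show ?thesis
  proof cases
    case 1 show ?thesis by (rule defI[OF refl cond6I]) (use 1 r zx o in auto)
  next
    case 2 show ?thesis by (rule defI[of _ x z y, OF _ cond6I]) (use 2 r y o2 in auto)
  next
    case 3 show ?thesis by (rule defI[of _ y x z, OF _ cond6I]) (use 3 r zx o2 in \<open>auto simp: xor.commute\<close>)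
  next
    case 4 show ?thesis by (rule defI[of _ y z x, OF _ cond6I]) (use 4 r x o2 in auto)
  next
    case 5 show ?thesis by (rule defI[of _ z x y, OF _ cond6I]) (use 5 r y o2 in \<open>auto simp: xor.commute\<close>)
  next
    case 6 show ?thesis by (rule defI[of _ z y x, OF _ cond6I]) (use 6 r x o2 in \<open>auto simp: xor.commute\<close>)
  qed
qed

lemma C6p: "C6_points = pt ` Mp" unfolding C6_points_def kind15 by (rule ptMp[symmetric])

lemma C6p_range: "u \<in> C6_points \<Longrightarrow> 1 \<le> u \<and> u \<le> 63"
  unfolding C6_points_def kind15 by (auto simp: K15_def)

lemma pt_pair_in: "i\<noteq>j \<Longrightarrow> i \<in> {1..7} \<Longrightarrow> j \<in> {1..7} \<Longrightarrow> pt {i,j} \<in> C6_points"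
  unfolding C6p using pair_in_Mp by blast

lemma lines_sup: "image pt ` Ml \<subseteq> C6_lines"
proof
  fix T assume "T \<in> image pt ` Ml"
  then obtain m where m: "m \<in> Ml" "T = pt ` m" by auto
  obtain a b c where abc: "a\<noteq>b" "b\<noteq>c" "a\<noteq>c" "{a,b,c} \<subseteq> {1..7}" "m = pairsof {a,b,c}"
    using m(1) by (rule Ml_elim)
  have T: "T = {pt {a,b}, pt {b,c}, pt {a,c}}" using m(2) abc pairsof_3 by simp
  have inM: "{a,b} \<in> Mp" "{b,c} \<in> Mp" "{a,c} \<in> Mp" using abc pair_in_Mp by auto
  have inC: "pt {a,b} \<in> C6_points" "pt {b,c} \<in> C6_points" "pt {a,c} \<in> C6_points"
    using abc pt_pair_in by auto
  have dd: "{a,b} \<noteq> {b,c}" "{b,c} \<noteq> {a,c}" "{a,b} \<noteq> {a,c}" using abc by (auto simp: doubleton_eq_iff)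
  have d: "pt {a,b} \<noteq> pt {b,c}" "pt {b,c} \<noteq> pt {a,c}" "pt {a,b} \<noteq> pt {a,c}"
    using dd inM inj_on_eq_iff[OF pt_inj] by metis+
  have z: "pt {a,c} = xor (pt {a,b}) (pt {b,c})" using abc by (simp add: pt_pair ptxor)
  have "\<not> ord3 (pt {a,b}) (pt {b,c}) (pt {a,c})"
    using CK1 abc unfolding set_L7 by (simp add: pt_pair)
  then have "defective_triple 6 T" unfolding T
    using def_sym[OF d(1) d(2) d(3)] C6p_range inC z by blast
  moreover have "T \<subseteq> C6_points" using T inC by auto
  ultimately show "T \<in> C6_lines" by (simp add: C6_lines_def)
qed


lemma Mp_pairs7: "P \<in> Mp \<Longrightarrow> \<exists>i j. (i,j) \<in> set pairs7 \<and> P = {i,j}"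
  using Mp_pairs by auto

lemma Mp_other: assumes "P \<in> Mp" "s \<in> P" shows "\<exists>t. P = {s,t} \<and> s \<noteq> t \<and> t \<in> {1..7} \<and> s \<in> {1..7}"
proof -
  obtain i j where ij: "P = {i,j}" "i\<noteq>j" "i\<in>{1..7}" "j\<in>{1..7}" using assms(1) unfolding Mp_mem by blast
  show ?thesis
  proof (cases "s = i")
    case True then show ?thesis using ij by auto
  next
    case False then have sj: "s = j" using ij assms(2) by auto
    have "P = {s,i}" unfolding sj ij(1) by (rule insert_commute)
    then show ?thesis using ij sj by blast
  qed
qed

lemma lines_sub: "C6_lines \<subseteq> image pt ` Ml"
proof
  fix T assume T: "T \<in> C6_lines"
  then have d: "defective_triple 6 T" "T \<subseteq> C6_points" by (auto simp: C6_lines_def)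
  obtain a b c where abc: "T = {a,b,c}" "cond6 a b c" using d(1) unfolding def_char by blast
  have c: "c = xor a b" "a < b" "b < c" using abc(2) by (auto simp: cond6_def)
  have inC: "a \<in> pt ` Mp" "b \<in> pt ` Mp" "c \<in> C6_points" using d(2) abc(1) C6p by auto
  obtain P where P: "P \<in> Mp" "a = pt P" using inC(1) by auto
  obtain Q where Q: "Q \<in> Mp" "b = pt Q" using inC(2) by auto
  have PQ: "P \<noteq> Q" using c P Q by auto
  show "T \<in> image pt ` Ml"
  proof (cases "P \<inter> Q = {}")
    case True
    obtain i j where ij: "(i,j) \<in> set pairs7" "P = {i,j}" using Mp_pairs7[OF P(1)] by blast
    obtain k l where kl: "(k,l) \<in> set pairs7" "Q = {k,l}" using Mp_pairs7[OF Q(1)] by blast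
    have ne: "i \<noteq> k \<and> i \<noteq> l \<and> j \<noteq> k \<and> j \<noteq> l" using True ij kl by auto
    have "xor (xor (w i) (w j)) (xor (w k) (w l)) \<notin> set K15"
      using CK2 ij(1) kl(1) ne by fastforce
    moreover have "pt P = xor (w i) (w j)" "pt Q = xor (w k) (w l)"
      using ij kl unfolding set_pairs7 by (auto simp: pt_pair)
    ultimately have "c \<notin> set K15" using c P Q by simp
    then show ?thesis using inC(3) unfolding C6_points_def kind15 by blast
  next
    case False
    then obtain s where s: "s \<in> P" "s \<in> Q" by blast
    obtain t1 where t1: "P = {s,t1}" "s \<noteq> t1" "t1 \<in> {1..7}" "s \<in> {1..7}" using Mp_other[OF P(1) s(1)] by blast
    obtain t2 where t2: "Q = {s,t2}" "s \<noteq> t2" "t2 \<in> {1..7}" using Mp_other[OF Q(1) s(2)] by blast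
    have t12: "t1 \<noteq> t2" using PQ t1 t2 by auto
    have "a = pt {t1,s}" using P(2) t1(1) by (simp add: insert_commute)
    then have a': "a = xor (w t1) (w s)" using pt_pair[of t1 s] t1(2) by simp
    have b': "b = xor (w s) (w t2)" using Q(2) t2 pt_pair[of s t2] by simp
    have "c = pt {t1,t2}" using c(1) a' b' ptxor pt_pair[OF t12] by simp
    then have "T = pt ` pairsof {t1,s,t2}"
      using abc(1) P(2) Q(2) t1 t2 t12 pairsof_3[of t1 s t2] by (auto simp: insert_commute)
    moreover have "pairsof {t1,s,t2} \<in> Ml" using Ml_intro[of t1 s t2] t1 t2 t12 by auto
    ultimately show ?thesis by blast
  qed
qed

lemma C6_iso: "siso Mp Ml C6_points C6_lines pt"
  unfolding siso_def
proof (intro conjI)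
  show "bij_betw pt Mp C6_points" using pt_inj C6p by (simp add: bij_betw_def)
  show "\<forall>l\<in>Ml. l \<subseteq> Mp" using Ml_sub by blast
  show "C6_lines = image pt ` Ml" using lines_sub lines_sup by blast
qed

lemma c73: "(7::nat) choose 3 = 35"
  by (simp add: eval_nat_numeral binomial_Suc_Suc)

lemma config_G2: "configuration (G2_points 7) (G2_lines 7) (\<subseteq>) 21 5 35 3"
proof -
  have fin: "finite (G2_points 7)" "finite (G2_lines 7)"
    by (rule rev_finite_subset[of "Pow {1..7}"], simp, auto simp: G2_points_def G2_lines_def)+
  have c1: "card (G2_points 7) = 21" unfolding G2_points_def by (simp add: n_subsets choose_two)
  have c2: "card (G2_lines 7) = 35" unfolding G2_lines_def by (simp add: n_subsets c73)
  have c3: "card {p\<in>G2_points 7. p \<subseteq> l} = 3" if l: "l \<in> G2_lines 7" for l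
  proof -
    have "{p\<in>G2_points 7. p \<subseteq> l} = {p. p \<subseteq> l \<and> card p = 2}" using l by (auto simp: G2_points_def G2_lines_def)
    moreover have "finite l" "card l = 3" using l by (auto simp: G2_lines_def intro: finite_subset)
    ultimately show ?thesis by (simp add: n_subsets choose_two)
  qed
  have c4: "card {l\<in>G2_lines 7. p \<subseteq> l} = 5" if p: "p \<in> G2_points 7" for p
  proof -
    have pp: "p \<subseteq> {1..7}" "card p = 2" "finite p" using p by (auto simp: G2_points_def intro: finite_subset)
    have e: "{l\<in>G2_lines 7. p \<subseteq> l} = (\<lambda>k. insert k p) ` ({1..7} - p)"
    proof (intro equalityI subsetI)
      fix l assume "l \<in> {l\<in>G2_lines 7. p \<subseteq> l}"
      then have l: "l \<subseteq> {1..7}" "card l = 3" "p \<subseteq> l" by (auto simp: G2_lines_def)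
      have fl: "finite l" using l(1) finite_subset by blast
      have "card (l - p) = 1" using l pp fl by (simp add: card_Diff_subset)
      then obtain k where k: "l - p = {k}" by (auto simp: card_Suc_eq)
      then have "l = insert k p" "k \<notin> p" "k \<in> {1..7}" using l by auto
      then show "l \<in> (\<lambda>k. insert k p) ` ({1..7} - p)" by auto
    next
      fix l assume "l \<in> (\<lambda>k. insert k p) ` ({1..7} - p)"
      then obtain k where k: "k \<in> {1..7}" "k \<notin> p" "l = insert k p" by auto
      then show "l \<in> {l\<in>G2_lines 7. p \<subseteq> l}" using pp by (auto simp: G2_lines_def)
    qed
    have "inj_on (\<lambda>k. insert k p) ({1..7} - p)" by (rule inj_onI) (auto simp: insert_ident)
    then have "card {l\<in>G2_lines 7. p \<subseteq> l} = card ({1..7::nat} - p)" unfolding e by (rule card_image)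
    also have "\<dots> = 5" using pp by (simp add: card_Diff_subset)
    finally show ?thesis .
  qed
  have c5: "card {l\<in>G2_lines 7. p \<subseteq> l \<and> q \<subseteq> l} \<le> 1" if pq: "p \<in> G2_points 7" "q \<in> G2_points 7" "p \<noteq> q" for p q
  proof -
    have pp: "card p = 2" "card q = 2" "finite p" "finite q" using pq by (auto simp: G2_points_def intro: finite_subset)
    have u: "card (p \<union> q) \<ge> 3"
    proof (rule ccontr)
      assume "\<not> 3 \<le> card (p \<union> q)"
      moreover have "card p \<le> card (p \<union> q)" "card q \<le> card (p \<union> q)"
        using card_mono[of "p \<union> q" p] card_mono[of "p \<union> q" q] pp by auto
      ultimately have "card (p \<union> q) = card p" "card (p \<union> q) = card q" using pp by auto
      then have "p = p \<union> q" "q = p \<union> q" using pp card_subset_eq[of "p \<union> q"] by auto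
      then show False using pq by auto
    qed
    have eq: "l = p \<union> q" if "l \<in> {l\<in>G2_lines 7. p \<subseteq> l \<and> q \<subseteq> l}" for l
    proof -
      have l: "card l = 3" "p \<union> q \<subseteq> l" "finite l" using that by (auto simp: G2_lines_def intro: finite_subset)
      have "card (p \<union> q) \<le> 3" using card_mono[OF l(3) l(2)] l(1) by simp
      then show ?thesis using card_subset_eq[OF l(3) l(2)] u l(1) by simp
    qed
    have finS: "finite {l\<in>G2_lines 7. p \<subseteq> l \<and> q \<subseteq> l}" using fin(2) by simp
    have "\<forall>a1\<in>{l\<in>G2_lines 7. p \<subseteq> l \<and> q \<subseteq> l}. \<forall>a2\<in>{l\<in>G2_lines 7. p \<subseteq> l \<and> q \<subseteq> l}. a1 = a2"
      using eq by metis
    then show ?thesis using card_le_Suc0_iff_eq[OF finS] by simp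
  qed
  show ?thesis unfolding configuration_def using fin c1 c2 c3 c4 c5 by blast
qed


abbreviation "hypC \<equiv> hyperplanes C6_points C6_lines (\<in>)"

definition Phi :: "nat \<Rightarrow> nat set" where "Phi m = pt ` HX (Xm m)"

lemma hypM: "hyperplanes Mp Ml (\<in>) = HX ` Xm ` {1..63}"
  unfolding hyps_M Xm_NE ..

lemma hypC_eq: "hypC = Phi ` {1..63}"
  unfolding S_hyps[OF C6_iso] hypM Phi_def by (simp add: image_image)

lemma Phi_inj: "inj_on Phi {1..63}"
proof (rule inj_onI)
  fix a b assume ab: "a \<in> {1..63::nat}" "b \<in> {1..63::nat}" "Phi a = Phi b"
  have "HX (Xm a) = HX (Xm b)" using ab(3) S_imeq[OF C6_iso HX_sub HX_sub] unfolding Phi_def by blast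
  then have "Xm a = Xm b" using HX_inj Xm_sub unfolding inj_on_def by blast
  then show "a = b" using Xm_inj1 ab(1,2) unfolding inj_on_def by blast
qed

lemma bijPhi: "bij_betw Phi {1..63} hypC"
  using Phi_inj hypC_eq by (simp add: bij_betw_def)

definition phi :: "nat set \<Rightarrow> nat" where "phi = the_inv_into {1..63} Phi"

lemma bij_phi: "bij_betw phi hypC {1..63}"
  unfolding phi_def using bijPhi by (rule bij_betw_the_inv_into)

lemma phi_Phi: "m \<in> {1..63} \<Longrightarrow> phi (Phi m) = m"
  unfolding phi_def using Phi_inj by (rule the_inv_into_f_f)

lemma xor_range: "a \<in> {1..63} \<Longrightarrow> b \<in> {1..63} \<Longrightarrow> a \<noteq> b \<Longrightarrow> xor a b \<in> {1..63::nat}"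
  using xor63[of a b] x3[of a b] by auto

lemma VL_C6: assumes "a \<in> {1..63}" "b \<in> {1..63}" "a \<noteq> b"
  shows "veldkamp_line C6_points C6_lines (\<in>) (Phi a) (Phi b) = {Phi a, Phi b, Phi (xor a b)}"
proof -
  have ne: "Xm a \<in> NE" "Xm b \<in> NE" using Xm_in_NE assms by auto
  have "Xm a \<noteq> Xm b" using Xm_inj1 assms unfolding inj_on_def by blast
  then have "veldkamp_line Mp Ml (\<in>) (HX (Xm a)) (HX (Xm b)) = {HX (Xm a), HX (Xm b), HX (Xm (xor a b))}"
    using VL_M[OF ne] by (simp add: Xm_xor)
  then show ?thesis unfolding Phi_def S_vline[OF C6_iso HX_sub HX_sub] by simp
qed

lemma VLs_C6: "veldkamp_lines C6_points C6_lines (\<in>) =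
   {{Phi a, Phi b, Phi (xor a b)} | a b. a \<in> {1..63::nat} \<and> b \<in> {1..63::nat} \<and> a \<noteq> b}"
proof (intro equalityI subsetI)
  fix V assume "V \<in> veldkamp_lines C6_points C6_lines (\<in>)"
  then obtain H1 H2 where H: "V = veldkamp_line C6_points C6_lines (\<in>) H1 H2" "H1 \<in> Phi ` {1..63}"
    "H2 \<in> Phi ` {1..63}" "H1 \<noteq> H2" unfolding veldkamp_lines_def hypC_eq by blast
  then obtain a b where ab: "a \<in> {1..63}" "b \<in> {1..63}" "H1 = Phi a" "H2 = Phi b" by blast
  then have "a \<noteq> b" using H(4) by blast
  then have "V = {Phi a, Phi b, Phi (xor a b)}" using VL_C6 ab H(1) by simp
  then show "V \<in> {{Phi a, Phi b, Phi (xor a b)} | a b. a \<in> {1..63::nat} \<and> b \<in> {1..63::nat} \<and> a \<noteq> b}"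
    using ab \<open>a \<noteq> b\<close> by blast
next
  fix V assume "V \<in> {{Phi a, Phi b, Phi (xor a b)} | a b. a \<in> {1..63::nat} \<and> b \<in> {1..63::nat} \<and> a \<noteq> b}"
  then obtain a b where ab: "a \<in> {1..63}" "b \<in> {1..63}" "a \<noteq> b" "V = {Phi a, Phi b, Phi (xor a b)}" by blast
  have "Phi a \<noteq> Phi b" using Phi_inj ab unfolding inj_on_def by blast
  moreover have "V = veldkamp_line C6_points C6_lines (\<in>) (Phi a) (Phi b)" using VL_C6 ab by simp
  moreover have "Phi a \<in> hypC" "Phi b \<in> hypC" using ab hypC_eq by auto
  ultimately show "V \<in> veldkamp_lines C6_points C6_lines (\<in>)" unfolding veldkamp_lines_def by blast
qed

lemma dist_sym: assumes d: "x\<noteq>y" "y\<noteq>z" "x\<noteq>z" and r: "1\<le>x" "1\<le>y" "1\<le>z" "x\<le>63" "y\<le>63" "z\<le>63"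
  and zx: "z = xor x y"
  shows "distinguished_triple 6 {x,y,z}"
proof -
  have x: "x = xor y z" unfolding zx xor.left_commute[of y x y] by simp
  have y: "y = xor x z" unfolding zx by (simp add: x1)
  have I: "T = {a,b,c} \<Longrightarrow> 1 \<le> a \<Longrightarrow> a < b \<Longrightarrow> b < c \<Longrightarrow> c \<le> 63 \<Longrightarrow> c = xor a b \<Longrightarrow> distinguished_triple 6 T" for T a b c
    unfolding dist_char by auto
  consider "x<y" "y<z" | "x<z" "z<y" | "y<x" "x<z" | "y<z" "z<x" | "z<x" "x<y" | "z<y" "y<x"
    using d by linarith
  then show ?thesis
  proof cases
    case 1 show ?thesis by (rule I[of _ x y z]) (use 1 r zx in auto)
  next
    case 2 show ?thesis by (rule I[of _ x z y]) (use 2 r y in auto)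
  next
    case 3 show ?thesis by (rule I[of _ y x z]) (use 3 r zx in \<open>auto simp: xor.commute\<close>)
  next
    case 4 show ?thesis by (rule I[of _ y z x]) (use 4 r x in auto)
  next
    case 5 show ?thesis by (rule I[of _ z x y]) (use 5 r y in \<open>auto simp: xor.commute\<close>)
  next
    case 6 show ?thesis by (rule I[of _ z y x]) (use 6 r x in \<open>auto simp: xor.commute\<close>)
  qed
qed

lemma DT_eq: "{T. distinguished_triple 6 T} = {{a, b, xor a b} | a b. a \<in> {1..63::nat} \<and> b \<in> {1..63::nat} \<and> a \<noteq> b}"
proof (intro equalityI subsetI)
  fix T assume "T \<in> {T. distinguished_triple 6 T}"
  then obtain a b c where abc: "T = {a,b,c}" "1 \<le> a" "a < b" "b < c" "c \<le> 63" "c = xor a b"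
    unfolding dist_char by auto
  then have "T = {a, b, xor a b}" "a \<in> {1..63}" "b \<in> {1..63}" "a \<noteq> b" by auto
  then show "T \<in> {{a, b, xor a b} | a b. a \<in> {1..63::nat} \<and> b \<in> {1..63::nat} \<and> a \<noteq> b}" by blast
next
  fix T assume "T \<in> {{a, b, xor a b} | a b. a \<in> {1..63::nat} \<and> b \<in> {1..63::nat} \<and> a \<noteq> b}"
  then obtain a b where ab: "T = {a, b, xor a b}" "a \<in> {1..63}" "b \<in> {1..63}" "a \<noteq> b" by auto
  have c: "xor a b \<in> {1..63}" using xor_range ab by blast
  have "xor a b \<noteq> a" using ab x1[of a b] by auto
  moreover have "xor a b \<noteq> b" using ab x2[of a b] by auto
  ultimately show "T \<in> {T. distinguished_triple 6 T}"
    using dist_sym[of a b "xor a b"] ab c by auto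
qed

lemma phi_img_VL: "(\<lambda>V. phi ` V) ` veldkamp_lines C6_points C6_lines (\<in>) = {T. distinguished_triple 6 T}"
proof -
  have "(\<lambda>V. phi ` V) ` {{Phi a, Phi b, Phi (xor a b)} | a b. a \<in> {1..63::nat} \<and> b \<in> {1..63::nat} \<and> a \<noteq> b}
        = {{a, b, xor a b} | a b. a \<in> {1..63::nat} \<and> b \<in> {1..63::nat} \<and> a \<noteq> b}"
  proof (intro equalityI subsetI)
    fix T assume "T \<in> (\<lambda>V. phi ` V) ` {{Phi a, Phi b, Phi (xor a b)} | a b. a \<in> {1..63::nat} \<and> b \<in> {1..63::nat} \<and> a \<noteq> b}"
    then obtain a b where ab: "a \<in> {1..63}" "b \<in> {1..63}" "a \<noteq> b" "T = phi ` {Phi a, Phi b, Phi (xor a b)}" by auto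
    then have "T = {a, b, xor a b}" using phi_Phi xor_range by simp
    then show "T \<in> {{a, b, xor a b} | a b. a \<in> {1..63::nat} \<and> b \<in> {1..63::nat} \<and> a \<noteq> b}" using ab by blast
  next
    fix T assume "T \<in> {{a, b, xor a b} | a b. a \<in> {1..63::nat} \<and> b \<in> {1..63::nat} \<and> a \<noteq> b}"
    then obtain a b where ab: "a \<in> {1..63}" "b \<in> {1..63}" "a \<noteq> b" "T = {a, b, xor a b}" by auto
    then have "T = phi ` {Phi a, Phi b, Phi (xor a b)}" using phi_Phi xor_range by simp
    then show "T \<in> (\<lambda>V. phi ` V) ` {{Phi a, Phi b, Phi (xor a b)} | a b. a \<in> {1..63::nat} \<and> b \<in> {1..63::nat} \<and> a \<noteq> b}"
      using ab by blast
  qed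
  then show ?thesis unfolding VLs_C6 DT_eq .
qed

lemma bij_VL: "bij_betw (\<lambda>V. phi ` V) (veldkamp_lines C6_points C6_lines (\<in>)) {T. distinguished_triple 6 T}"
proof -
  have "\<Union> (veldkamp_lines C6_points C6_lines (\<in>)) \<subseteq> hypC"
    unfolding veldkamp_lines_def veldkamp_line_def by auto
  then have "inj_on phi (\<Union> (veldkamp_lines C6_points C6_lines (\<in>)))"
    using bij_phi by (auto simp: bij_betw_def intro: inj_on_subset)
  then have "inj_on ((`) phi) (veldkamp_lines C6_points C6_lines (\<in>))" by (rule inj_on_image)
  then show ?thesis using phi_img_VL by (simp add: bij_betw_def)
qed

lemma card_Phi: "m \<in> {1..63} \<Longrightarrow> card (Phi m) = (card (Xm m) choose 2) + ((7 - card (Xm m)) choose 2)"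
  unfolding Phi_def using S_card[OF C6_iso HX_sub] card_HX_NE[OF Xm_in_NE] by simp

lemma phi_kind: "phi ` {H \<in> hypC. card H = n} = {m \<in> {1..63}. card (Phi m) = n}"
proof -
  have "{H \<in> hypC. card H = n} = Phi ` {m \<in> {1..63}. card (Phi m) = n}" unfolding hypC_eq by auto
  then show ?thesis using phi_Phi by (auto simp: image_image)
qed

lemma kinds_phi: "phi ` {H \<in> hypC. card H = 9} = kind 21"
   "phi ` {H \<in> hypC. card H = 11} = kind 15"
   "phi ` {H \<in> hypC. card H = 15} = kind 0"
proof -
  have b: "1 \<le> card (Xm m)" "card (Xm m) \<le> 6" if "m \<in> {1..63}" for m
    using NE_card[OF Xm_in_NE[OF that]] by auto
  show "phi ` {H \<in> hypC. card H = 9} = kind 21"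
    unfolding phi_kind kind_cards using card_Phi ch_cases(1) b by (auto simp: choose_two)
  show "phi ` {H \<in> hypC. card H = 11} = kind 15"
    unfolding phi_kind kind_cards using card_Phi ch_cases(2) b by (auto simp: choose_two)
  show "phi ` {H \<in> hypC. card H = 15} = kind 0"
    unfolding phi_kind kind_cards using card_Phi ch_cases(3) b by (auto simp: choose_two)
qed


lemma C6_cols: assumes "p0 \<in> Mp" "q0 \<in> Mp"
  shows "collinear C6_lines (\<in>) (pt p0) (pt q0) \<longleftrightarrow> collinear Ml (\<in>) p0 q0"
  using S_col[OF C6_iso assms] .

lemma S9C: "\<forall>H \<in> hypC. card H = 9 \<longrightarrow>
       (\<exists>l \<in> C6_lines.
          let Q = {q \<in> C6_points. \<forall>p \<in> l. \<not> collinear C6_lines (\<in>) p q} in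
          H = l \<union> Q \<and> l \<inter> Q = {} \<and>
          isomorphic_to_G2 Q {m \<in> C6_lines. m \<subseteq> Q} (\<in>) 4)"
proof (intro ballI impI)
  fix H' assume H': "H' \<in> hypC" "card H' = 9"
  obtain H where H: "H \<in> hyperplanes Mp Ml (\<in>)" "H' = pt ` H" using H'(1) S_hyps[OF C6_iso] by auto
  have HP: "H \<subseteq> Mp" using H(1) S_hyp_sub[OF C6_iso] by blast
  have "card H = 9" using H'(2) H(2) S_card[OF C6_iso HP] by simp
  from S9M[OF H(1) this] obtain l where l: "l \<in> Ml"
    and lQ: "H = l \<union> {q\<in>Mp. \<forall>p\<in>l. \<not> collinear Ml (\<in>) p q}"
      "l \<inter> {q\<in>Mp. \<forall>p\<in>l. \<not> collinear Ml (\<in>) p q} = {}"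
      "isomorphic_to_G2 {q\<in>Mp. \<forall>p\<in>l. \<not> collinear Ml (\<in>) p q}
          {m\<in>Ml. m \<subseteq> {q\<in>Mp. \<forall>p\<in>l. \<not> collinear Ml (\<in>) p q}} (\<in>) 4"
    unfolding Let_def by blast
  define Q where "Q = {q\<in>Mp. \<forall>p\<in>l. \<not> collinear Ml (\<in>) p q}"
  have lP: "l \<subseteq> Mp" using Ml_sub l by blast
  have QP: "Q \<subseteq> Mp" by (auto simp: Q_def)
  have Q': "{q \<in> C6_points. \<forall>p \<in> pt ` l. \<not> collinear C6_lines (\<in>) p q} = pt ` Q"
  proof (intro equalityI subsetI)
    fix q assume q: "q \<in> {q \<in> C6_points. \<forall>p \<in> pt ` l. \<not> collinear C6_lines (\<in>) p q}"
    then obtain q0 where q0: "q0 \<in> Mp" "q = pt q0" unfolding C6p by auto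
    have "\<forall>p\<in>l. \<not> collinear Ml (\<in>) p q0" using q q0 C6_cols lP by blast
    then show "q \<in> pt ` Q" using q0 by (auto simp: Q_def)
  next
    fix q assume "q \<in> pt ` Q"
    then obtain q0 where q0: "q0 \<in> Q" "q = pt q0" by auto
    have "q0 \<in> Mp" "\<forall>p\<in>l. \<not> collinear Ml (\<in>) p q0" using q0 by (auto simp: Q_def)
    then show "q \<in> {q \<in> C6_points. \<forall>p \<in> pt ` l. \<not> collinear C6_lines (\<in>) p q}"
      using q0 C6_cols lP unfolding C6p by blast
  qed
  have l': "pt ` l \<in> C6_lines" using l S_L'[OF C6_iso] by blast
  show "\<exists>l \<in> C6_lines.
          let Q = {q \<in> C6_points. \<forall>p \<in> l. \<not> collinear C6_lines (\<in>) p q} in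
          H' = l \<union> Q \<and> l \<inter> Q = {} \<and>
          isomorphic_to_G2 Q {m \<in> C6_lines. m \<subseteq> Q} (\<in>) 4"
  proof (rule bexI[OF _ l'], unfold Let_def Q')
    have "H' = pt ` l \<union> pt ` Q" using H(2) lQ(1) Q_def by auto
    moreover have "pt ` l \<inter> pt ` Q = {}" using S_imint[OF C6_iso lP QP] lQ(2) Q_def by simp
    moreover have "isomorphic_to_G2 (pt ` Q) {m \<in> C6_lines. m \<subseteq> pt ` Q} (\<in>) 4"
      using siso_G2[OF C6_iso QP] lQ(3) Q_def by simp
    ultimately show "H' = pt ` l \<union> pt ` Q \<and> pt ` l \<inter> pt ` Q = {} \<and>
       isomorphic_to_G2 (pt ` Q) {m \<in> C6_lines. m \<subseteq> pt ` Q} (\<in>) 4" by blast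
  qed
qed

lemma S11C: "\<forall>H \<in> hypC. card H = 11 \<longrightarrow>
       (\<exists>p \<in> C6_points.
          let Q = {q \<in> C6_points. q \<noteq> p \<and> \<not> collinear C6_lines (\<in>) p q} in
          H = insert p Q \<and>
          isomorphic_to_G2 Q {m \<in> C6_lines. m \<subseteq> Q} (\<in>) 5)"
proof (intro ballI impI)
  fix H' assume H': "H' \<in> hypC" "card H' = 11"
  obtain H where H: "H \<in> hyperplanes Mp Ml (\<in>)" "H' = pt ` H" using H'(1) S_hyps[OF C6_iso] by auto
  have HP: "H \<subseteq> Mp" using H(1) S_hyp_sub[OF C6_iso] by blast
  have "card H = 11" using H'(2) H(2) S_card[OF C6_iso HP] by simp
  from S11M[OF H(1) this] obtain p where p: "p \<in> Mp"
    and pQ: "H = insert p {q\<in>Mp. q \<noteq> p \<and> \<not> collinear Ml (\<in>) p q}"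
      "isomorphic_to_G2 {q\<in>Mp. q \<noteq> p \<and> \<not> collinear Ml (\<in>) p q}
          {m\<in>Ml. m \<subseteq> {q\<in>Mp. q \<noteq> p \<and> \<not> collinear Ml (\<in>) p q}} (\<in>) 5"
    unfolding Let_def by blast
  define Q where "Q = {q\<in>Mp. q \<noteq> p \<and> \<not> collinear Ml (\<in>) p q}"
  have QP: "Q \<subseteq> Mp" by (auto simp: Q_def)
  have Q': "{q \<in> C6_points. q \<noteq> pt p \<and> \<not> collinear C6_lines (\<in>) (pt p) q} = pt ` Q"
  proof (intro equalityI subsetI)
    fix q assume q: "q \<in> {q \<in> C6_points. q \<noteq> pt p \<and> \<not> collinear C6_lines (\<in>) (pt p) q}"
    then obtain q0 where q0: "q0 \<in> Mp" "q = pt q0" unfolding C6p by auto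
    have "q0 \<noteq> p" "\<not> collinear Ml (\<in>) p q0" using q q0 C6_cols[OF p q0(1)] by auto
    then show "q \<in> pt ` Q" using q0 by (auto simp: Q_def)
  next
    fix q assume "q \<in> pt ` Q"
    then obtain q0 where q0: "q0 \<in> Q" "q = pt q0" by auto
    have h: "q0 \<in> Mp" "q0 \<noteq> p" "\<not> collinear Ml (\<in>) p q0" using q0 by (auto simp: Q_def)
    have "pt q0 \<noteq> pt p" using h p pt_inj unfolding inj_on_def by blast
    moreover have "pt q0 \<in> pt ` Mp" using h(1) by blast
    ultimately show "q \<in> {q \<in> C6_points. q \<noteq> pt p \<and> \<not> collinear C6_lines (\<in>) (pt p) q}"
      using q0(2) h C6_cols[OF p h(1)] unfolding C6p by simp
  qed
  have p': "pt p \<in> C6_points" using p C6p by blast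
  show "\<exists>p \<in> C6_points.
          let Q = {q \<in> C6_points. q \<noteq> p \<and> \<not> collinear C6_lines (\<in>) p q} in
          H' = insert p Q \<and>
          isomorphic_to_G2 Q {m \<in> C6_lines. m \<subseteq> Q} (\<in>) 5"
  proof (rule bexI[OF _ p'], unfold Let_def Q')
    have "H' = insert (pt p) (pt ` Q)" using H(2) pQ(1) Q_def by auto
    moreover have "isomorphic_to_G2 (pt ` Q) {m \<in> C6_lines. m \<subseteq> pt ` Q} (\<in>) 5"
      using siso_G2[OF C6_iso QP] pQ(2) Q_def by simp
    ultimately show "H' = insert (pt p) (pt ` Q) \<and>
       isomorphic_to_G2 (pt ` Q) {m \<in> C6_lines. m \<subseteq> pt ` Q} (\<in>) 5" by blast
  qed
qed

lemma S15C: "\<forall>H \<in> hypC. card H = 15 \<longrightarrow> isomorphic_to_G2 H {m \<in> C6_lines. m \<subseteq> H} (\<in>) 6"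
proof (intro ballI impI)
  fix H' assume H': "H' \<in> hypC" "card H' = 15"
  obtain H where H: "H \<in> hyperplanes Mp Ml (\<in>)" "H' = pt ` H" using H'(1) S_hyps[OF C6_iso] by auto
  have HP: "H \<subseteq> Mp" using H(1) S_hyp_sub[OF C6_iso] by blast
  have "card H = 15" using H'(2) H(2) S_card[OF C6_iso HP] by simp
  from S15M[OF H(1) this] show "isomorphic_to_G2 H' {m \<in> C6_lines. m \<subseteq> H'} (\<in>) 6"
    using siso_G2[OF C6_iso HP] H(2) by simp
qed

lemma isoG2_C6: "isomorphic_to_G2 C6_points C6_lines (\<in>) 7"
proof -
  have g: "isomorphic_to_G2 Mp {m\<in>Ml. m \<subseteq> Mp} (\<in>) (card {1..7::nat})" by (rule sub_G2) simp
  have e: "{m\<in>Ml. m \<subseteq> Mp} = Ml" using Ml_sub by blast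
  have c7: "card {1..7::nat} = 7" by simp
  have "isomorphic_to_G2 (pt ` Mp) {m\<in>C6_lines. m \<subseteq> pt ` Mp} (\<in>) 7"
    using siso_G2[OF C6_iso subset_refl] g unfolding e c7 by blast
  moreover have "{m\<in>C6_lines. m \<subseteq> C6_points} = C6_lines" by (auto simp: C6_lines_def)
  ultimately show ?thesis unfolding C6p[symmetric] by simp
qed

lemma config_C6: "configuration C6_points C6_lines (\<in>) 21 5 35 3"
  using config_transfer[OF isoG2_C6[unfolded isomorphic_to_G2_def] config_G2] .

lemma units6: "cd_units 6 = {1..63}" by (simp add: cd_units_def)

lemma card_hypC: "card hypC = 63"
  using bij_betw_same_card[OF bij_phi] by simp

theorem mainTheorem4:
  shows
   "\<comment> \<open>(i)\<close>
    card (kind 21) = 35 \<and> card (kind 15) = 21 \<and> card (kind 0) = 7 \<and>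
    kind 21 \<union> kind 15 \<union> kind 0 = cd_units 6 \<and>
    \<comment> \<open>(ii)\<close>
    configuration C6_points C6_lines (\<in>) 21 5 35 3 \<and>
    isomorphic_to_G2 C6_points C6_lines (\<in>) 7 \<and>
    \<comment> \<open>(iii)\<close>
    card (hyperplanes C6_points C6_lines (\<in>)) = 63 \<and>
    (\<exists>\<phi> :: nat set \<Rightarrow> nat.
       bij_betw \<phi> (hyperplanes C6_points C6_lines (\<in>)) (cd_units 6) \<and>
       bij_betw (\<lambda>V. \<phi> ` V) (veldkamp_lines C6_points C6_lines (\<in>))
                {T. distinguished_triple 6 T} \<and>
       \<phi> ` {H \<in> hyperplanes C6_points C6_lines (\<in>). card H = 9} = kind 21 \<and>
       \<phi> ` {H \<in> hyperplanes C6_points C6_lines (\<in>). card H = 11} = kind 15 \<and>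
       \<phi> ` {H \<in> hyperplanes C6_points C6_lines (\<in>). card H = 15} = kind 0) \<and>
    \<comment> \<open>structure of the three types of hyperplanes\<close>
    (\<forall>H \<in> hyperplanes C6_points C6_lines (\<in>). card H = 9 \<longrightarrow>
       (\<exists>l \<in> C6_lines.
          let Q = {q \<in> C6_points. \<forall>p \<in> l. \<not> collinear C6_lines (\<in>) p q} in
          H = l \<union> Q \<and> l \<inter> Q = {} \<and>
          isomorphic_to_G2 Q {m \<in> C6_lines. m \<subseteq> Q} (\<in>) 4)) \<and>
    (\<forall>H \<in> hyperplanes C6_points C6_lines (\<in>). card H = 11 \<longrightarrow>
       (\<exists>p \<in> C6_points.
          let Q = {q \<in> C6_points. q \<noteq> p \<and> \<not> collinear C6_lines (\<in>) p q} in
          H = insert p Q \<and>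
          isomorphic_to_G2 Q {m \<in> C6_lines. m \<subseteq> Q} (\<in>) 5)) \<and>
    (\<forall>H \<in> hyperplanes C6_points C6_lines (\<in>). card H = 15 \<longrightarrow>
       isomorphic_to_G2 H {m \<in> C6_lines. m \<subseteq> H} (\<in>) 6)"

proof -
  have P1: "\<exists>\<phi> :: nat set \<Rightarrow> nat.
       bij_betw \<phi> (hyperplanes C6_points C6_lines (\<in>)) (cd_units 6) \<and>
       bij_betw (\<lambda>V. \<phi> ` V) (veldkamp_lines C6_points C6_lines (\<in>))
                {T. distinguished_triple 6 T} \<and>
       \<phi> ` {H \<in> hyperplanes C6_points C6_lines (\<in>). card H = 9} = kind 21 \<and>
       \<phi> ` {H \<in> hyperplanes C6_points C6_lines (\<in>). card H = 11} = kind 15 \<and>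
       \<phi> ` {H \<in> hyperplanes C6_points C6_lines (\<in>). card H = 15} = kind 0"
    using bij_phi bij_VL kinds_phi unfolding units6 by blast
  show ?thesis
    using card_kinds kinds_union config_C6 isoG2_C6 card_hypC P1 S9C S11C S15C by blast
qed


end
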